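(* Let $\mathcal{T}_0$ be a triangulation of a finite point set $\mathcal{P}$ in the plane and let $F=\langle f_1,\ldots,f_r\rangle$ be a valid sequence of flips with $\mathcal{T}_0 \xrightarrow{F} \mathcal{T}_r$. For any ordering $(C_1,\ldots,C_\ell)$ of the (weakly connected) components of $\mathcal{D}_F$, there is a permutation $\pi(F)$ of the flips in $F$ such that $\mathcal{T}_0 \xrightarrow{\pi(F)} \mathcal{T}_r$ and such that for any flips $f_i\in C_t$ and $f_j\in C_s$ with $1\le t<s\le \ell$, $f_i$ appears before $f_j$ in $\pi(F)$. That is, the flips of each component appear as a consecutive block in $\pi(F)$, and the blocks appear in the given order of their components.
   Context: A triangulation of a finite point set $\mathcal{P}$ in the plane is a partition of the convex hull of $\mathcal{P}$ into triangles whose vertex set is $\mathcal{P}$. For an interior edge $e$ of a triangulation $\mathcal{T}$, the quadrilateral associated with $e$ is the union of the two triangles of $\mathcal{T}$ sharing $e$. A flip $f$ with underlying edge $\epsilon(f)=e$ is admissible in $\mathcal{T}$ if $e\in\mathcal{T}$ and its associated quadrilateral is convex; performing it replaces $e$ by the other diagonal $\phi(f)$ of that quadrilateral. Two distinct edges share a triangle in $\mathcal{T}$ if they are edges of the same triangle of $\mathcal{T}$. A sequence $F=\langle f_1,\ldots,f_r\rangle$ is valid with respect to $\mathcal{T}$ if there are triangulations $\mathcal{T}_0=\mathcal{T},\mathcal{T}_1,\ldots,\mathcal{T}_r$ such that $f_i$ is admissible in $\mathcal{T}_{i-1}$ and performing it yields $\mathcal{T}_i$; then we write $\mathcal{T}\xrightarrow{F}\mathcal{T}_r$.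 Flips in a sequence are distinct objects even if they have the same underlying edge. For $1\le i<j\le r$, flip $f_j$ is adjacent to $f_i$ (written $f_i\to f_j$) if (1) either $\phi(f_i)=\epsilon(f_j)$ or $\phi(f_i)$ and $\epsilon(f_j)$ share a triangle in $\mathcal{T}_{j-1}$, and (2) there is no $p$ with $i<p<j$ and $\epsilon(f_p)=\phi(f_i)$. $\mathcal{D}_F$ is the directed acyclic graph whose nodes are the flips of $F$ and whose arcs are the pairs $f_i\to f_j$. A component of a directed graph means a weakly connected component (connected component of the underlying undirected graph). *)

theory Defs
  imports "HOL-Analysis.Analysis"
begin

type_synonym pt = "real \<times> real"
type_synonym edge = "pt set"
type_synonym triangle = "pt set"
(* a flip is the pair (underlying edge eps(f), new diagonal phi(f)) *)
type_synonym flip = "edge \<times> edge"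

definition eps :: "flip \<Rightarrow> edge" where "eps f = fst f"
definition phi :: "flip \<Rightarrow> edge" where "phi f = snd f"

definition is_triangle :: "pt set \<Rightarrow> triangle \<Rightarrow> bool" where
  "is_triangle P t \<longleftrightarrow> t \<subseteq> P \<and> card t = 3 \<and> \<not> collinear t"

definition triangulation :: "pt set \<Rightarrow> triangle set \<Rightarrow> bool" where
  "triangulation P T \<longleftrightarrow> finite P \<and> finite T \<and>
     (\<forall>t\<in>T. is_triangle P t) \<and>
     (\<Union>t\<in>T. convex hull t) = convex hull P \<and>
     (\<forall>t1\<in>T. \<forall>t2\<in>T. t1 \<noteq> t2 \<longrightarrow> convex hull t1 \<inter> convex hull t2 = convex hull (t1 \<inter> t2)) \<and>
     \<Union>T = P"

definition edges :: "triangle set \<Rightarrow> edge set" where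
  "edges T = {e. card e = 2 \<and> (\<exists>t\<in>T. e \<subseteq> t)}"

definition share_triangle :: "triangle set \<Rightarrow> edge \<Rightarrow> edge \<Rightarrow> bool" where
  "share_triangle T e1 e2 \<longleftrightarrow> e1 \<noteq> e2 \<and> card e1 = 2 \<and> card e2 = 2 \<and> (\<exists>t\<in>T. e1 \<subseteq> t \<and> e2 \<subseteq> t)"

(* f admissible in T: eps f is an (interior) edge of T, shared by two triangles t1, t2 whose
   union (the associated quadrilateral) is convex; phi f is the other diagonal *)
definition admissible :: "triangle set \<Rightarrow> flip \<Rightarrow> bool" where
  "admissible T f \<longleftrightarrow> eps f \<in> edges T \<and>
     (\<exists>t1\<in>T. \<exists>t2\<in>T. t1 \<noteq> t2 \<and> eps f \<subseteq> t1 \<and> eps f \<subseteq> t2 \<and>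
        convex (convex hull t1 \<union> convex hull t2) \<and>
        phi f = (t1 \<union> t2) - eps f)"

(* result of performing f in T: the two triangles containing eps f are replaced by the two
   triangles containing phi f *)
definition perform :: "triangle set \<Rightarrow> flip \<Rightarrow> triangle set" where
  "perform T f = (T - {t\<in>T. eps f \<subseteq> t}) \<union> ((\<lambda>a. insert a (phi f)) ` eps f)"

definition tri_after :: "triangle set \<Rightarrow> flip list \<Rightarrow> nat \<Rightarrow> triangle set" where
  "tri_after T F i = foldl perform T (take i F)"

definition valid_seq :: "pt set \<Rightarrow> triangle set \<Rightarrow> flip list \<Rightarrow> bool" where
  "valid_seq P T F \<longleftrightarrow> triangulation P T \<and>
     (\<forall>i<length F. admissible (tri_after T F i) (F ! i) \<and>
                    triangulation P (tri_after T F (Suc i)))"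

(* adjacency f_i -> f_j in D_F, with 0-based indices (the triangulation before flip j is
   tri_after T F j, i.e. T_{j-1} in 1-based notation) *)
definition adj :: "triangle set \<Rightarrow> flip list \<Rightarrow> nat \<Rightarrow> nat \<Rightarrow> bool" where
  "adj T F i j \<longleftrightarrow> i < j \<and> j < length F \<and>
     (phi (F ! i) = eps (F ! j) \<or> share_triangle (tri_after T F j) (phi (F ! i)) (eps (F ! j))) \<and>
     \<not> (\<exists>p. i < p \<and> p < j \<and> eps (F ! p) = phi (F ! i))"

definition DF_arcs :: "triangle set \<Rightarrow> flip list \<Rightarrow> (nat \<times> nat) set" where
  "DF_arcs T F = {(i, j). adj T F i j}"

definition DF_components :: "triangle set \<Rightarrow> flip list \<Rightarrow> nat set set" where
  "DF_components T F = {..<length F} // ((DF_arcs T F \<union> (DF_arcs T F)\<inverse>)\<^sup>*)"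

end

theory Submission
  imports Defs
begin


lemma lin_indep2:
  fixes a b c :: pt
  assumes nc: "\<not> collinear {a,b,c}" and eq: "s *\<^sub>R (b - a) + t *\<^sub>R (c - a) = 0"
  shows "s = 0 \<and> t = 0"
proof (rule ccontr)
  assume H: "\<not> (s = 0 \<and> t = 0)"
  show False
  proof (cases "s = 0")
    case True
    then have "t \<noteq> 0" using H by simp
    then have "c = a" using eq True by simp
    then show False using nc by (simp add: collinear_3_expand)
  next
    case False
    have "b = (1 + t/s) *\<^sub>R a + (1 - (1 + t/s)) *\<^sub>R c"
    proof -
      have "s *\<^sub>R (b - a) = - (t *\<^sub>R (c - a))" using eq by (simp add: eq_neg_iff_add_eq_0)
      then have "(1/s) *\<^sub>R (s *\<^sub>R (b - a)) = (1/s) *\<^sub>R (- (t *\<^sub>R (c - a)))" by simp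
      then have "b - a = (- t/s) *\<^sub>R (c - a)" using False by simp
      then show ?thesis by (simp add: algebra_simps)
    qed
    then have "collinear {a,b,c}" unfolding collinear_3_expand by blast
    then show False using nc by simp
  qed
qed

lemma bary_unique:
  fixes a b c :: pt
  assumes nc: "\<not> collinear {a,b,c}"
    and s: "x1 + y1 + z1 = x2 + y2 + z2"
    and e: "x1 *\<^sub>R a + y1 *\<^sub>R b + z1 *\<^sub>R c = x2 *\<^sub>R a + y2 *\<^sub>R b + z2 *\<^sub>R c"
  shows "x1 = x2 \<and> y1 = y2 \<and> z1 = z2"
proof -
  have "(y1 - y2) *\<^sub>R (b - a) + (z1 - z2) *\<^sub>R (c - a) = 0"
  proof -
    have "(y1 - y2) *\<^sub>R (b - a) + (z1 - z2) *\<^sub>R (c - a) = (x1 *\<^sub>R a + y1 *\<^sub>R b + z1 *\<^sub>R c) - (x2 *\<^sub>R a + y2 *\<^sub>R b + z2 *\<^sub>R c) - ((x1+y1+z1) - (x2+y2+z2)) *\<^sub>R a"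
      by (simp add: algebra_simps)
    then show ?thesis using s e by simp
  qed
  from lin_indep2[OF nc this] s show ?thesis by simp
qed

lemma bary_exists:
  fixes a b c z :: pt
  assumes nc: "\<not> collinear {a,b,c}"
  shows "\<exists>x y w. x + y + w = 1 \<and> z = x *\<^sub>R a + y *\<^sub>R b + w *\<^sub>R c"
proof -
  have d: "a \<noteq> b" "a \<noteq> c" "b \<noteq> c" "\<not> affine_dependent {a,b,c}"
    using nc collinear_3_eq_affine_dependent by blast+
  have "card {a,b,c} = 3" using d by simp
  then have "aff_dim {a,b,c} = 2" using aff_dim_affine_independent[OF d(4)] by simp
  then have "affine hull {a,b,c} = UNIV" using aff_dim_eq_full[where 'n = pt] by simp
  then have "z \<in> affine hull {a,b,c}" by simp
  then show ?thesis unfolding affine_hull_3 by blast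
qed

lemma hull3E:
  assumes "z \<in> convex hull {a,b,c}"
  obtains u v w where "0 \<le> u" "0 \<le> v" "0 \<le> w" "u + v + w = 1"
    "z = u *\<^sub>R a + v *\<^sub>R b + w *\<^sub>R c"
  using assms unfolding convex_hull_3 by blast

lemma hull3I:
  assumes "0 \<le> u" "0 \<le> v" "0 \<le> w" "u + v + w = 1"
  shows "u *\<^sub>R a + v *\<^sub>R b + w *\<^sub>R c \<in> convex hull {a,b,c}"
  using assms unfolding convex_hull_3 by blast

lemma openseg_param:
  assumes "m \<in> open_segment a b"
  obtains u where "0 < u" "u < 1" "m = (1 - u) *\<^sub>R a + u *\<^sub>R b"
  using assms unfolding in_segment by blast

lemma closedsegE:
  assumes "z \<in> closed_segment a b"
  obtains s where "0 \<le> s" "s \<le> 1" "z = (1 - s) *\<^sub>R a + s *\<^sub>R b"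
  using assms unfolding in_segment by blast

lemma closedsegI:
  assumes "0 \<le> s" "s \<le> 1"
  shows "(1 - s) *\<^sub>R a + s *\<^sub>R b \<in> closed_segment a b"
  using assms unfolding in_segment by blast

lemma hull_split:
  fixes a b c m :: pt
  assumes "m \<in> closed_segment a b"
  shows "convex hull {a,b,c} \<subseteq> convex hull {a,m,c} \<union> convex hull {m,b,c}"
proof
  fix z assume "z \<in> convex hull {a,b,c}"
  then have "z \<in> convex hull (insert c {a,b})" by (simp add: insert_commute)
  then obtain x where x: "x \<in> convex hull {a,b}" "z \<in> closed_segment c x"
    unfolding convex_hull_insert_segments by auto
  have "x \<in> closed_segment a m \<union> closed_segment m b"
    using x(1) Un_closed_segment[OF assms] by (simp add: segment_convex_hull)
  then show "z \<in> convex hull {a,m,c} \<union> convex hull {m,b,c}"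
  proof
    assume "x \<in> closed_segment a m"
    moreover have "closed_segment a m \<subseteq> convex hull {a,m,c}"
      unfolding segment_convex_hull by (rule hull_mono) auto
    ultimately have "x \<in> convex hull {a,m,c}" by blast
    moreover have "c \<in> convex hull {a,m,c}" by (simp add: hull_inc)
    ultimately have "closed_segment c x \<subseteq> convex hull {a,m,c}"
      by (simp add: closed_segment_subset convex_convex_hull)
    then show ?thesis using x(2) by auto
  next
    assume "x \<in> closed_segment m b"
    moreover have "closed_segment m b \<subseteq> convex hull {m,b,c}"
      unfolding segment_convex_hull by (rule hull_mono) auto
    ultimately have "x \<in> convex hull {m,b,c}" by blast
    moreover have "c \<in> convex hull {m,b,c}" by (simp add: hull_inc)
    ultimately have "closed_segment c x \<subseteq> convex hull {m,b,c}"
      by (simp add: closed_segment_subset convex_convex_hull)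
    then show ?thesis using x(2) by auto
  qed
qed

lemma cevian_inter:
  fixes a b c m :: pt
  assumes nc: "\<not> collinear {a,b,c}" and m: "m \<in> open_segment a b"
    and z1: "z \<in> convex hull {a,m,c}" and z2: "z \<in> convex hull {m,b,c}"
  shows "z \<in> closed_segment c m"
proof -
  obtain u where u: "0 < u" "u < 1" "m = (1 - u) *\<^sub>R a + u *\<^sub>R b" using m openseg_param by blast
  obtain l1 n1 k1 where h1: "0 \<le> l1" "0 \<le> n1" "0 \<le> k1" "l1 + n1 + k1 = 1" "z = l1 *\<^sub>R a + n1 *\<^sub>R m + k1 *\<^sub>R c"
    using z1 hull3E by blast
  obtain n2 l2 k2 where h2: "0 \<le> n2" "0 \<le> l2" "0 \<le> k2" "n2 + l2 + k2 = 1" "z = n2 *\<^sub>R m + l2 *\<^sub>R b + k2 *\<^sub>R c"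
    using z2 hull3E by blast
  have e1: "z = (l1 + n1 * (1 - u)) *\<^sub>R a + (n1 * u) *\<^sub>R b + k1 *\<^sub>R c"
    using h1(5) u(3) by (simp add: algebra_simps)
  have e2: "z = (n2 * (1 - u)) *\<^sub>R a + (l2 + n2 * u) *\<^sub>R b + k2 *\<^sub>R c"
    using h2(5) u(3) by (simp add: algebra_simps)
  have "l1 + n1 * (1 - u) = n2 * (1 - u) \<and> n1 * u = l2 + n2 * u \<and> k1 = k2"
    apply (rule bary_unique[OF nc])
    using h1(4) h2(4) apply (simp add: algebra_simps)
    using e1 e2 by simp
  then have q: "l1 = (n2 - n1) * (1 - u)" "l2 = (n1 - n2) * u" by (simp_all add: algebra_simps)
  have "n2 - n1 \<ge> 0" using q(1) h1(1) u by (simp add: zero_le_mult_iff)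
  moreover have "n1 - n2 \<ge> 0" using q(2) h2(2) u by (simp add: zero_le_mult_iff)
  ultimately have "n1 = n2" by simp
  then have "l1 = 0" using q by simp
  then have "k1 = 1 - n1" using h1(4) by simp
  then have "z = (1 - n1) *\<^sub>R c + n1 *\<^sub>R m" using h1(5) \<open>l1 = 0\<close> by simp
  moreover have "n1 \<le> 1" using h1 \<open>l1 = 0\<close> by simp
  ultimately show ?thesis using h1(2) closedsegI[of n1 c m] by simp
qed

lemma hull_sub3:
  assumes "x \<in> convex hull S" "y \<in> convex hull S" "w \<in> convex hull S"
  shows "convex hull {x,y,w} \<subseteq> convex hull S"
  by (rule hull_minimal) (use assms convex_convex_hull in auto)

lemma seg_in_hull3: "closed_segment a b \<subseteq> convex hull {a,b,c}"
  unfolding segment_convex_hull by (rule hull_mono) auto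

lemma cevian_edge:
  fixes a b c m :: pt
  assumes nc: "\<not> collinear {a,b,c}" and m: "m \<in> open_segment a b"
    and z1: "z \<in> convex hull {a,m,c}" and z2: "z \<in> closed_segment a b"
  shows "z \<in> closed_segment a m"
proof -
  obtain u where u: "0 < u" "u < 1" "m = (1 - u) *\<^sub>R a + u *\<^sub>R b" using m openseg_param by blast
  obtain l n k where h1: "0 \<le> l" "0 \<le> n" "0 \<le> k" "l + n + k = 1" "z = l *\<^sub>R a + n *\<^sub>R m + k *\<^sub>R c"
    using z1 hull3E by blast
  obtain s where h2: "0 \<le> s" "s \<le> 1" "z = (1 - s) *\<^sub>R a + s *\<^sub>R b" using z2 closedsegE by blast
  have e1: "z = (l + n * (1 - u)) *\<^sub>R a + (n * u) *\<^sub>R b + k *\<^sub>R c"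
    using h1(5) u(3) by (simp add: algebra_simps)
  have e2: "z = (1 - s) *\<^sub>R a + s *\<^sub>R b + 0 *\<^sub>R c" using h2 by simp
  have "l + n * (1 - u) = 1 - s \<and> n * u = s \<and> k = 0"
    apply (rule bary_unique[OF nc])
    using h1(4) apply (simp add: algebra_simps)
    using e1 e2 by simp
  then have "k = 0" by simp
  then have "l = 1 - n" using h1(4) by simp
  then have "z = (1 - n) *\<^sub>R a + n *\<^sub>R m" using h1(5) \<open>k = 0\<close> by simp
  moreover have "n \<le> 1" using h1 \<open>k = 0\<close> by simp
  ultimately show ?thesis using h1(2) closedsegI[of n a m] by simp
qed

lemma seg_meet:
  fixes a b c m :: pt
  assumes nc: "\<not> collinear {a,b,c}" and m: "m \<in> open_segment a b"
    and z1: "z \<in> closed_segment a m" and z2: "z \<in> closed_segment m b"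
  shows "z = m"
proof -
  obtain u where u: "0 < u" "u < 1" "m = (1 - u) *\<^sub>R a + u *\<^sub>R b" using m openseg_param by blast
  obtain s where h1: "0 \<le> s" "s \<le> 1" "z = (1 - s) *\<^sub>R a + s *\<^sub>R m" using z1 closedsegE by blast
  obtain r where h2: "0 \<le> r" "r \<le> 1" "z = (1 - r) *\<^sub>R m + r *\<^sub>R b" using z2 closedsegE by blast
  have e1: "z = (1 - s * u) *\<^sub>R a + (s * u) *\<^sub>R b + 0 *\<^sub>R c"
    using h1(3) u(3) by (simp add: algebra_simps)
  have e2: "z = ((1 - r) * (1 - u)) *\<^sub>R a + ((1 - r) * u + r) *\<^sub>R b + 0 *\<^sub>R c"
    using h2(3) u(3) by (simp add: algebra_simps)
  have "1 - s * u = (1 - r) * (1 - u) \<and> s * u = (1 - r) * u + r \<and> (0::real) = 0"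
    apply (rule bary_unique[OF nc])
     apply (simp add: algebra_simps)
    using e1 e2 by simp
  then have q0: "s * u = (1 - r) * u + r" by blast
  have "r * (1 - u) = r - r * u" "(s - 1) * u = s * u - u" "(1 - r) * u = u - r * u"
    by (simp_all add: algebra_simps)
  then have q: "r * (1 - u) = (s - 1) * u" using q0 by linarith
  have "(s - 1) * u \<le> 0" by (rule mult_nonpos_nonneg) (use h1(2) u(1) in auto)
  moreover have "r * (1 - u) \<ge> 0" by (rule mult_nonneg_nonneg) (use h2(1) u(2) in auto)
  ultimately have "r * (1 - u) = 0" using q by linarith
  then have "r = 0" using u(2) by simp
  then show ?thesis using h2(3) by simp
qed


lemma seg_not_cross:
  fixes a b c m :: pt
  assumes nc: "\<not> collinear {a,b,c}" and m: "m \<in> open_segment a b"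
    and z: "m \<in> closed_segment a c"
  shows False
proof -
  obtain u where u: "0 < u" "u < 1" "m = (1 - u) *\<^sub>R a + u *\<^sub>R b" using m openseg_param by blast
  obtain s where h: "0 \<le> s" "s \<le> 1" "m = (1 - s) *\<^sub>R a + s *\<^sub>R c" using z closedsegE by blast
  have "1 - u = 1 - s \<and> u = 0 \<and> 0 = s"
    apply (rule bary_unique[OF nc])
     apply simp
    using u(3) h(3) by simp
  then show False using u by simp
qed

lemma seg_bc_amc:
  fixes a b c m :: pt
  assumes nc: "\<not> collinear {a,b,c}" and m: "m \<in> open_segment a b"
    and z1: "z \<in> closed_segment b c" and z2: "z \<in> convex hull {a,m,c}"
  shows "z = c"
proof -
  obtain u where u: "0 < u" "u < 1" "m = (1 - u) *\<^sub>R a + u *\<^sub>R b" using m openseg_param by blast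
  obtain l n k where h1: "0 \<le> l" "0 \<le> n" "0 \<le> k" "l + n + k = 1" "z = l *\<^sub>R a + n *\<^sub>R m + k *\<^sub>R c"
    using z2 hull3E by blast
  obtain s where h2: "0 \<le> s" "s \<le> 1" "z = (1 - s) *\<^sub>R b + s *\<^sub>R c" using z1 closedsegE by blast
  have e1: "z = (l + n * (1 - u)) *\<^sub>R a + (n * u) *\<^sub>R b + k *\<^sub>R c"
    using h1(5) u(3) by (simp add: algebra_simps)
  have e2: "z = 0 *\<^sub>R a + (1 - s) *\<^sub>R b + s *\<^sub>R c" using h2 by simp
  have q: "l + n * (1 - u) = 0 \<and> n * u = 1 - s \<and> k = s"
    apply (rule bary_unique[OF nc])
    using h1(4) apply (simp add: algebra_simps)
    using e1 e2 by simp
  have "n * (1 - u) \<ge> 0" using h1(2) u(2) by simp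
  then have "n * (1 - u) = 0" using q h1(1) by linarith
  then have "n = 0" using u(2) by simp
  then have "s = 1" using q by simp
  then show ?thesis using h2(3) by simp
qed

lemma b_notin_amc:
  fixes a b c m :: pt
  assumes nc: "\<not> collinear {a,b,c}" and m: "m \<in> open_segment a b"
  shows "b \<notin> convex hull {a,m,c}"
proof
  assume "b \<in> convex hull {a,m,c}"
  moreover have "b \<in> closed_segment b c" by simp
  ultimately have "b = c" using seg_bc_amc[OF nc m] by blast
  then show False using nc by simp
qed

lemma seg_bc_ab:
  fixes a b c :: pt
  assumes nc: "\<not> collinear {a,b,c}"
    and z1: "z \<in> closed_segment b c" and z2: "z \<in> closed_segment a b"
  shows "z = b"
proof -
  obtain s where h1: "0 \<le> s" "s \<le> 1" "z = (1 - s) *\<^sub>R b + s *\<^sub>R c" using z1 closedsegE by blast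
  obtain r where h2: "0 \<le> r" "r \<le> 1" "z = (1 - r) *\<^sub>R a + r *\<^sub>R b" using z2 closedsegE by blast
  have "0 = 1 - r \<and> 1 - s = r \<and> s = 0"
    apply (rule bary_unique[OF nc])
     apply simp
    using h1(3) h2(3) by simp
  then show ?thesis using h1(3) by simp
qed

lemma open_sub_closed: "m \<in> open_segment a b \<Longrightarrow> m \<in> closed_segment a b"
  by (simp add: open_closed_segment)

lemma quad_cover:
  fixes a b c d m :: pt
  assumes nc1: "\<not> collinear {a,b,c}" and nc2: "\<not> collinear {a,b,d}"
    and mab: "m \<in> open_segment a b" and mcd: "m \<in> open_segment c d"
  shows "convex hull {a,b,c} \<union> convex hull {a,b,d} \<subseteq> convex hull {a,c,d} \<union> convex hull {b,c,d}"
proof -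
  have m1: "m \<in> convex hull {a,c,d}"
    using seg_in_hull3[of c d a] open_sub_closed[OF mcd] by (auto simp: insert_commute)
  have m2: "m \<in> convex hull {b,c,d}"
    using seg_in_hull3[of c d b] open_sub_closed[OF mcd] by (auto simp: insert_commute)
  have i1: "convex hull {a,m,c} \<subseteq> convex hull {a,c,d}"
    by (rule hull_sub3) (use m1 in \<open>auto intro: hull_inc\<close>)
  have i2: "convex hull {m,b,c} \<subseteq> convex hull {b,c,d}"
    by (rule hull_sub3) (use m2 in \<open>auto intro: hull_inc\<close>)
  have i3: "convex hull {a,m,d} \<subseteq> convex hull {a,c,d}"
    by (rule hull_sub3) (use m1 in \<open>auto intro: hull_inc\<close>)
  have i4: "convex hull {m,b,d} \<subseteq> convex hull {b,c,d}"
    by (rule hull_sub3) (use m2 in \<open>auto intro: hull_inc\<close>)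
  show ?thesis
    using hull_split[OF open_sub_closed[OF mab], of c] hull_split[OF open_sub_closed[OF mab], of d]
      i1 i2 i3 i4 by blast
qed

lemma quad_sub:
  fixes a b c d :: pt
  assumes cv: "convex (convex hull {a,b,c} \<union> convex hull {a,b,d})"
  shows "convex hull {a,c,d} \<subseteq> convex hull {a,b,c} \<union> convex hull {a,b,d}"
  by (rule hull_minimal) (use cv in \<open>auto intro: hull_inc\<close>)

lemma quad_new_inter:
  fixes a b c d m :: pt
  assumes nc1: "\<not> collinear {a,b,c}" and nc2: "\<not> collinear {a,b,d}"
    and mab: "m \<in> open_segment a b" and mcd: "m \<in> open_segment c d"
    and ff: "convex hull {a,b,c} \<inter> convex hull {a,b,d} \<subseteq> closed_segment a b"
    and z1: "z \<in> convex hull {a,c,d}" and z2: "z \<in> convex hull {b,c,d}"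
  shows "z \<in> closed_segment c d"
proof -
  have mab': "m \<in> open_segment b a" using mab by (simp add: open_segment_commute)
  have nc1': "\<not> collinear {b,a,c}" using nc1 by (simp add: insert_commute)
  have nc2': "\<not> collinear {b,a,d}" using nc2 by (simp add: insert_commute)
  have mc: "m \<in> closed_segment c d" using open_sub_closed[OF mcd] .
  have cm: "closed_segment c m \<subseteq> closed_segment c d"
    by (simp add: mc subset_closed_segment)
  have dm: "closed_segment d m \<subseteq> closed_segment c d"
    using mc by (metis closed_segment_commute ends_in_segment(2) subset_closed_segment)
  have mab_in: "m \<in> convex hull {a,b,c}" "m \<in> convex hull {a,b,d}"
    using seg_in_hull3 open_sub_closed[OF mab] by blast+
  have amc: "convex hull {a,m,c} \<subseteq> convex hull {a,b,c}"
    by (rule hull_sub3) (use mab_in in \<open>auto intro: hull_inc\<close>)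
  have mbc: "convex hull {m,b,c} \<subseteq> convex hull {a,b,c}"
    by (rule hull_sub3) (use mab_in in \<open>auto intro: hull_inc\<close>)
  have amd: "convex hull {a,m,d} \<subseteq> convex hull {a,b,d}"
    by (rule hull_sub3) (use mab_in in \<open>auto intro: hull_inc\<close>)
  have mbd: "convex hull {m,b,d} \<subseteq> convex hull {a,b,d}"
    by (rule hull_sub3) (use mab_in in \<open>auto intro: hull_inc\<close>)
  have s1: "convex hull {a,c,d} \<subseteq> convex hull {a,m,c} \<union> convex hull {a,m,d}"
    using hull_split[OF mc, of a] by (auto simp: insert_commute)
  have s2: "convex hull {b,c,d} \<subseteq> convex hull {m,b,c} \<union> convex hull {m,b,d}"
    using hull_split[OF mc, of b] by (auto simp: insert_commute)
  have e1: "w \<in> closed_segment a m" if "w \<in> convex hull {a,m,c}" "w \<in> closed_segment a b" for w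
    using cevian_edge[OF nc1 mab that] .
  have e2: "w \<in> closed_segment a m" if "w \<in> convex hull {a,m,d}" "w \<in> closed_segment a b" for w
    using cevian_edge[OF nc2 mab that] .
  have e3: "w \<in> closed_segment m b" if "w \<in> convex hull {m,b,c}" "w \<in> closed_segment a b" for w
  proof -
    have "w \<in> convex hull {b,m,c}" using that(1) by (simp add: insert_commute)
    moreover have "w \<in> closed_segment b a" using that(2) by (simp add: closed_segment_commute)
    ultimately show ?thesis using cevian_edge[OF nc1' mab'] by (simp add: closed_segment_commute)
  qed
  have e4: "w \<in> closed_segment m b" if "w \<in> convex hull {m,b,d}" "w \<in> closed_segment a b" for w
  proof -
    have "w \<in> convex hull {b,m,d}" using that(1) by (simp add: insert_commute)
    moreover have "w \<in> closed_segment b a" using that(2) by (simp add: closed_segment_commute)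
    ultimately show ?thesis using cevian_edge[OF nc2' mab'] by (simp add: closed_segment_commute)
  qed
  have zc: "z \<in> convex hull {a,m,c} \<or> z \<in> convex hull {a,m,d}" using s1 z1 by blast
  have zd: "z \<in> convex hull {m,b,c} \<or> z \<in> convex hull {m,b,d}" using s2 z2 by blast
  show ?thesis
  proof (cases "z \<in> convex hull {a,m,c}")
    case A: True
    show ?thesis
    proof (cases "z \<in> convex hull {m,b,c}")
      case True
      then show ?thesis using cevian_inter[OF nc1 mab A True] cm by blast
    next
      case False
      then have B: "z \<in> convex hull {m,b,d}" using zd by blast
      have "z \<in> closed_segment a b" using ff A B amc mbd by blast
      then have "z = m" using seg_meet[OF nc1 mab e1[OF A] e4[OF B]] by blast
      then show ?thesis using mc by simp
    qed
  next
    case False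
    then have A: "z \<in> convex hull {a,m,d}" using zc by blast
    show ?thesis
    proof (cases "z \<in> convex hull {m,b,d}")
      case True
      then show ?thesis using cevian_inter[OF nc2 mab A True] dm by blast
    next
      case False
      then have B: "z \<in> convex hull {m,b,c}" using zd by blast
      have "z \<in> closed_segment a b" using ff A B amd mbc by blast
      then have "z = m" using seg_meet[OF nc1 mab e2[OF A] e3[OF B]] by blast
      then show ?thesis using mc by simp
    qed
  qed
qed

lemma quad_seg:
  fixes a b c d m :: pt
  assumes nc1: "\<not> collinear {a,b,c}" and nc2: "\<not> collinear {a,b,d}"
    and mab: "m \<in> open_segment a b" and mcd: "m \<in> open_segment c d"
    and ff: "convex hull {a,b,c} \<inter> convex hull {a,b,d} \<subseteq> closed_segment a b"
    and z1: "z \<in> closed_segment b c" and z2: "z \<in> convex hull {a,c,d}"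
  shows "z = c"
proof -
  have mc: "m \<in> closed_segment c d" using open_sub_closed[OF mcd] .
  have s1: "convex hull {a,c,d} \<subseteq> convex hull {a,m,c} \<union> convex hull {a,m,d}"
    using hull_split[OF mc, of a] by (auto simp: insert_commute)
  have mab_in: "m \<in> convex hull {a,b,d}"
    using seg_in_hull3 open_sub_closed[OF mab] by blast+
  have amd: "convex hull {a,m,d} \<subseteq> convex hull {a,b,d}"
    by (rule hull_sub3) (use mab_in in \<open>auto intro: hull_inc\<close>)
  have bc: "closed_segment b c \<subseteq> convex hull {a,b,c}"
    using seg_in_hull3[of b c a] by (simp add: insert_commute)
  show ?thesis
  proof (cases "z \<in> convex hull {a,m,c}")
    case True
    then show ?thesis using seg_bc_amc[OF nc1 mab z1] by blast
  next
    case False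
    then have A: "z \<in> convex hull {a,m,d}" using s1 z2 by blast
    then have "z \<in> closed_segment a b" using ff amd bc z1 by blast
    then have "z = b" using seg_bc_ab[OF nc1 z1] by blast
    then show ?thesis using A b_notin_amc[OF nc2 mab] by simp
  qed
qed

lemma in_seg_collinear:
  fixes a c d :: pt
  assumes "a \<in> closed_segment c d"
  shows "collinear {a,c,d}"
proof -
  have "{a,c,d} \<subseteq> closed_segment c d" using assms by auto
  then show ?thesis using collinear_closed_segment collinear_subset by blast
qed

lemma quad_m:
  fixes a b c d :: pt
  assumes nc1: "\<not> collinear {a,b,c}" and nc2: "\<not> collinear {a,b,d}"
    and nc3: "\<not> collinear {a,c,d}" and nc4: "\<not> collinear {b,c,d}"
    and ff: "convex hull {a,b,c} \<inter> convex hull {a,b,d} \<subseteq> closed_segment a b"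
    and cv: "convex (convex hull {a,b,c} \<union> convex hull {a,b,d})"
  obtains m where "m \<in> open_segment a b" "m \<in> open_segment c d"
proof -
  let ?A = "convex hull {a,b,c}" and ?B = "convex hull {a,b,d}" and ?S = "closed_segment c d"
  have cA: "closed ?A" "closed ?B"
    by (simp_all add: compact_imp_closed finite_imp_compact_convex_hull)
  have c_in: "c \<in> ?A" "d \<in> ?B" by (simp_all add: hull_inc)
  have "?S \<subseteq> ?A \<union> ?B"
    by (rule closed_segment_subset) (use c_in cv in auto)
  moreover have "connected ?S" by simp
  ultimately have "?A \<inter> ?B \<inter> ?S \<noteq> {}"
    using c_in cA unfolding connected_closed by blast
  then obtain m where m: "m \<in> ?A" "m \<in> ?B" "m \<in> ?S" by blast
  then have mab: "m \<in> closed_segment a b" using ff by blast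
  have "m \<noteq> a" using m(3) nc3 in_seg_collinear by blast
  moreover have "m \<noteq> b" using m(3) nc4 in_seg_collinear by blast
  moreover have "m \<noteq> c"
  proof
    assume "m = c"
    then have "collinear {c,a,b}" using mab in_seg_collinear by blast
    then show False using nc1 by (simp add: insert_commute)
  qed
  moreover have "m \<noteq> d"
  proof
    assume "m = d"
    then have "collinear {d,a,b}" using mab in_seg_collinear by blast
    then show False using nc2 by (simp add: insert_commute)
  qed
  ultimately show ?thesis using that mab m(3) unfolding open_segment_def by blast
qed

lemma third_core:
  fixes a b c m w :: pt
  assumes nc: "\<not> collinear {a,b,c}" and mab: "m \<in> open_segment a b"
    and w: "w = p *\<^sub>R a + q *\<^sub>R b + r *\<^sub>R c" "p + q + r = 1" "r > 0"
  shows "\<exists>z. z \<in> convex hull {a,b,w} \<and> z \<in> convex hull {a,b,c} \<and> z \<notin> closed_segment a b"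
proof -
  obtain u where u: "0 < u" "u < 1" "m = (1 - u) *\<^sub>R a + u *\<^sub>R b" using mab openseg_param by blast
  define K where "K = 1 + \<bar>p\<bar> + \<bar>q\<bar>"
  define M where "M = min u (1 - u)"
  define \<delta> where "\<delta> = M / (2 * K)"
  have K1: "K \<ge> 1" unfolding K_def by simp
  have M: "M > 0" "M \<le> u" "M \<le> 1 - u" using u unfolding M_def by auto
  have dpos: "\<delta> > 0" unfolding \<delta>_def using M K1 by simp
  have dK: "\<delta> * K = M / 2" unfolding \<delta>_def using K1 by simp
  have dle: "\<delta> \<le> 1/2"
  proof -
    have "\<delta> * K \<le> 1/2 * K" using dK M u K1 by simp
    then show ?thesis using K1 by simp
  qed
  have dp: "\<delta> * \<bar>p\<bar> \<le> M / 2"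
  proof -
    have "\<delta> * \<bar>p\<bar> \<le> \<delta> * K" using dpos unfolding K_def by (intro mult_left_mono) auto
    then show ?thesis using dK by simp
  qed
  have dq: "\<delta> * \<bar>q\<bar> \<le> M / 2"
  proof -
    have "\<delta> * \<bar>q\<bar> \<le> \<delta> * K" using dpos unfolding K_def by (intro mult_left_mono) auto
    then show ?thesis using dK by simp
  qed
  define \<alpha> where "\<alpha> = (1 - \<delta>) * (1 - u) + \<delta> * p"
  define \<beta> where "\<beta> = (1 - \<delta>) * u + \<delta> * q"
  define \<gamma> where "\<gamma> = \<delta> * r"
  have a0: "\<alpha> \<ge> 0"
  proof -
    obtain X Y where XY: "X = (1 - \<delta>) * (1 - u)" "Y = \<delta> * p" by blast
    have "X \<ge> 1/2 * (1 - u)" unfolding XY using dle u by (intro mult_right_mono) auto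
    moreover have "Y \<ge> - (\<delta> * \<bar>p\<bar>)" unfolding XY using mult_left_mono[of "-\<bar>p\<bar>" p \<delta>] dpos by simp
    ultimately have "X + Y \<ge> 0" using dp M by argo
    then show ?thesis unfolding \<alpha>_def XY .
  qed
  have b0: "\<beta> \<ge> 0"
  proof -
    obtain X Y where XY: "X = (1 - \<delta>) * u" "Y = \<delta> * q" by blast
    have "X \<ge> 1/2 * u" unfolding XY using dle u by (intro mult_right_mono) auto
    moreover have "Y \<ge> - (\<delta> * \<bar>q\<bar>)" unfolding XY using mult_left_mono[of "-\<bar>q\<bar>" q \<delta>] dpos by simp
    ultimately have "X + Y \<ge> 0" using dq M by argo
    then show ?thesis unfolding \<beta>_def XY .
  qed
  have g0: "\<gamma> > 0" unfolding \<gamma>_def using dpos w(3) by simp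
  define z where "z = (1 - \<delta>) *\<^sub>R m + \<delta> *\<^sub>R w"
  have zeq: "z = \<alpha> *\<^sub>R a + \<beta> *\<^sub>R b + \<gamma> *\<^sub>R c"
    unfolding z_def \<alpha>_def \<beta>_def \<gamma>_def u(3) w(1) by (simp add: algebra_simps)
  have sum: "\<alpha> + \<beta> + \<gamma> = 1"
  proof -
    have "\<alpha> + \<beta> + \<gamma> = (1 - \<delta>) + \<delta> * (p + q + r)"
      unfolding \<alpha>_def \<beta>_def \<gamma>_def by (simp add: algebra_simps)
    then show ?thesis using w(2) by simp
  qed
  have z1: "z \<in> convex hull {a,b,c}" using zeq hull3I[OF a0 b0 _ sum] g0 by simp
  have "m \<in> convex hull {a,b,w}" using seg_in_hull3 open_sub_closed[OF mab] by blast
  moreover have "w \<in> convex hull {a,b,w}" by (simp add: hull_inc)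
  ultimately have "closed_segment m w \<subseteq> convex hull {a,b,w}"
    by (simp add: closed_segment_subset convex_convex_hull)
  moreover have "z \<in> closed_segment m w" unfolding z_def using dpos dle by (intro closedsegI) auto
  ultimately have z2: "z \<in> convex hull {a,b,w}" by blast
  have z3: "z \<notin> closed_segment a b"
  proof
    assume "z \<in> closed_segment a b"
    then obtain s where s: "z = (1 - s) *\<^sub>R a + s *\<^sub>R b + 0 *\<^sub>R c" using closedsegE by (metis add_0_right scale_zero_left)
    have "\<alpha> = 1 - s \<and> \<beta> = s \<and> \<gamma> = 0"
      apply (rule bary_unique[OF nc])
      using sum apply simp
      using zeq s by simp
    then show False using g0 by simp
  qed
  show ?thesis using z1 z2 z3 by blast
qed

lemma third_tri:
  fixes a b c d m w :: pt
  assumes nc1: "\<not> collinear {a,b,c}" and nc2: "\<not> collinear {a,b,d}" and ncw: "\<not> collinear {a,b,w}"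
    and mab: "m \<in> open_segment a b" and mcd: "m \<in> open_segment c d"
    and ffc: "convex hull {a,b,w} \<inter> convex hull {a,b,c} \<subseteq> closed_segment a b"
    and ffd: "convex hull {a,b,w} \<inter> convex hull {a,b,d} \<subseteq> closed_segment a b"
  shows False
proof -
  obtain p q r where w: "p + q + r = 1" "w = p *\<^sub>R a + q *\<^sub>R b + r *\<^sub>R c"
    using bary_exists[OF nc1] by blast
  obtain u where u: "0 < u" "u < 1" "m = (1 - u) *\<^sub>R a + u *\<^sub>R b" using mab openseg_param by blast
  obtain v where v: "0 < v" "v < 1" "m = (1 - v) *\<^sub>R c + v *\<^sub>R d" using mcd openseg_param by blast
  have "r \<noteq> 0"
  proof
    assume "r = 0"
    then have "w \<in> affine hull {a,b}" using w unfolding affine_hull_2 by auto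
    then show False using ncw affine_hull_3_imp_collinear by blast
  qed
  then consider "r > 0" | "r < 0" by linarith
  then show False
  proof cases
    case 1
    then show False using third_core[OF nc1 mab w(2) w(1) 1] ffc by blast
  next
    case 2
    define P' where "P' = p + r * (1 - u) / (1 - v)"
    define Q' where "Q' = q + r * u / (1 - v)"
    define R' where "R' = - r * v / (1 - v)"
    have v1: "1 - v \<noteq> 0" using v by simp
    have cc: "(1 - v) *\<^sub>R c = (1 - u) *\<^sub>R a + u *\<^sub>R b - v *\<^sub>R d"
      using u(3) v(3) by (simp add: algebra_simps)
    have "(1 - v) *\<^sub>R (P' *\<^sub>R a + Q' *\<^sub>R b + R' *\<^sub>R d)
          = (1 - v) *\<^sub>R (p *\<^sub>R a + q *\<^sub>R b) + r *\<^sub>R ((1 - u) *\<^sub>R a + u *\<^sub>R b - v *\<^sub>R d)"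
    proof -
      have k1: "(1 - v) * P' = (1 - v) * p + r * (1 - u)" unfolding P'_def using v1 by (simp add: field_simps)
      have k2: "(1 - v) * Q' = (1 - v) * q + r * u" unfolding Q'_def using v1 by (simp add: field_simps)
      have k3: "(1 - v) * R' = - (r * v)" unfolding R'_def using v1 by (simp add: field_simps)
      have "(1 - v) *\<^sub>R (P' *\<^sub>R a + Q' *\<^sub>R b + R' *\<^sub>R d) = ((1 - v) * P') *\<^sub>R a + ((1 - v) * Q') *\<^sub>R b + ((1 - v) * R') *\<^sub>R d"
        by (simp add: scaleR_add_right)
      also have "\<dots> = ((1 - v) * p + r * (1 - u)) *\<^sub>R a + ((1 - v) * q + r * u) *\<^sub>R b + (- (r * v)) *\<^sub>R d"
        unfolding k1 k2 k3 ..
      also have "\<dots> = (1 - v) *\<^sub>R (p *\<^sub>R a + q *\<^sub>R b) + r *\<^sub>R ((1 - u) *\<^sub>R a + u *\<^sub>R b - v *\<^sub>R d)"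
        by (simp add: algebra_simps)
      finally show ?thesis .
    qed
    also have "\<dots> = (1 - v) *\<^sub>R w"
      unfolding w(2) cc[symmetric] by (simp add: algebra_simps)
    finally have "(1 - v) *\<^sub>R (P' *\<^sub>R a + Q' *\<^sub>R b + R' *\<^sub>R d) = (1 - v) *\<^sub>R w" .
    then have w': "w = P' *\<^sub>R a + Q' *\<^sub>R b + R' *\<^sub>R d" using v1 by simp
    have s': "P' + Q' + R' = 1"
    proof -
      have k1: "(1 - v) * P' = (1 - v) * p + r * (1 - u)" unfolding P'_def using v1 by (simp add: field_simps)
      have k2: "(1 - v) * Q' = (1 - v) * q + r * u" unfolding Q'_def using v1 by (simp add: field_simps)
      have k3: "(1 - v) * R' = - (r * v)" unfolding R'_def using v1 by (simp add: field_simps)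
      have "(1 - v) * (P' + Q' + R') = (1 - v) * P' + (1 - v) * Q' + (1 - v) * R'" by (simp add: algebra_simps)
      also have "\<dots> = (1 - v) * (p + q + r)" unfolding k1 k2 k3 by (simp add: algebra_simps)
      finally have "(1 - v) * (P' + Q' + R') = (1 - v) * 1" using w(1) by simp
      then show ?thesis using v1 mult_left_cancel[OF v1, of "P' + Q' + R'" 1] by blast
    qed
    have "r * v < 0" using 2 v by (simp add: mult_neg_pos)
    then have "r * v / (1 - v) < 0" using v by (simp add: divide_neg_pos)
    then have "R' > 0" unfolding R'_def by simp
    then show False using third_core[OF nc2 mab w' s'] ffd by blast
  qed
qed


lemma tri_is_tri: "triangulation P T \<Longrightarrow> t \<in> T \<Longrightarrow> is_triangle P t"
  unfolding triangulation_def by blast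

lemma tri_card: "triangulation P T \<Longrightarrow> t \<in> T \<Longrightarrow> card t = 3"
  using tri_is_tri is_triangle_def by blast

lemma tri_nc: "triangulation P T \<Longrightarrow> t \<in> T \<Longrightarrow> \<not> collinear t"
  using tri_is_tri is_triangle_def by blast

lemma tri_sub: "triangulation P T \<Longrightarrow> t \<in> T \<Longrightarrow> t \<subseteq> P"
  using tri_is_tri is_triangle_def by blast

lemma tri_ff: "triangulation P T \<Longrightarrow> t1 \<in> T \<Longrightarrow> t2 \<in> T \<Longrightarrow> t1 \<noteq> t2 \<Longrightarrow>
   convex hull t1 \<inter> convex hull t2 = convex hull (t1 \<inter> t2)"
  unfolding triangulation_def by blast

lemma card3_sup:
  assumes "card t = 3" "{a,b} \<subseteq> t" "a \<noteq> b"
  obtains c where "t = {a,b,c}" "c \<noteq> a" "c \<noteq> b"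
proof -
  have fin: "finite t" using assms(1) by (metis card.infinite zero_neq_numeral)
  have "card (t - {a,b}) = 1" using assms fin by (simp add: card_Diff_subset)
  then obtain c where c: "t - {a,b} = {c}" using card_1_singletonE by blast
  then have "t = {a,b,c}" using assms(2) by blast
  moreover have "c \<noteq> a" "c \<noteq> b" using c by auto
  ultimately show ?thesis using that by blast
qed

definition Qd :: "triangle set \<Rightarrow> pt \<Rightarrow> pt \<Rightarrow> pt \<Rightarrow> pt \<Rightarrow> bool" where
  "Qd T a b c d \<longleftrightarrow> {a,b,c} \<in> T \<and> {a,b,d} \<in> T \<and> a \<noteq> b \<and> a \<noteq> c \<and> a \<noteq> d \<and> b \<noteq> c \<and> b \<noteq> d \<and> c \<noteq> d
     \<and> convex (convex hull {a,b,c} \<union> convex hull {a,b,d}) \<and> \<not> collinear {a,c,d} \<and> \<not> collinear {b,c,d}"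

lemma Qd_swap_ab: "Qd T a b c d \<Longrightarrow> Qd T b a c d"
  unfolding Qd_def by (auto simp: insert_commute)

lemma Qd_swap_cd: "Qd T a b c d \<Longrightarrow> Qd T a b d c"
  unfolding Qd_def by (auto simp: insert_commute Un_commute)

lemma Qd_geo:
  assumes tr: "triangulation P T" and q: "Qd T a b c d"
  shows "\<not> collinear {a,b,c}" "\<not> collinear {a,b,d}"
    "convex hull {a,b,c} \<inter> convex hull {a,b,d} \<subseteq> closed_segment a b"
proof -
  show "\<not> collinear {a,b,c}" "\<not> collinear {a,b,d}" using q tri_nc[OF tr] unfolding Qd_def by blast+
  have "{a,b,c} \<noteq> {a,b,d}" using q unfolding Qd_def by (auto simp: doubleton_eq_iff)
  then have "convex hull {a,b,c} \<inter> convex hull {a,b,d} = convex hull ({a,b,c} \<inter> {a,b,d})"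
    using tri_ff[OF tr] q unfolding Qd_def by blast
  also have "{a,b,c} \<inter> {a,b,d} = {a,b}" using q unfolding Qd_def by auto
  finally show "convex hull {a,b,c} \<inter> convex hull {a,b,d} \<subseteq> closed_segment a b"
    by (simp add: segment_convex_hull)
qed

lemma Qd_m:
  assumes tr: "triangulation P T" and q: "Qd T a b c d"
  obtains m where "m \<in> open_segment a b" "m \<in> open_segment c d"
proof -
  note g = Qd_geo[OF tr q]
  show ?thesis
    by (rule quad_m[OF g(1) g(2) _ _ g(3)]) (use q that in \<open>auto simp: Qd_def\<close>)
qed

lemma only_two:
  assumes tr: "triangulation P T" and q: "Qd T a b c d" and t: "t \<in> T" "{a,b} \<subseteq> t"
  shows "t = {a,b,c} \<or> t = {a,b,d}"
proof (rule ccontr)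
  assume ne: "\<not> (t = {a,b,c} \<or> t = {a,b,d})"
  have ab: "a \<noteq> b" using q unfolding Qd_def by blast
  obtain w where w: "t = {a,b,w}" "w \<noteq> a" "w \<noteq> b" using card3_sup[OF tri_card[OF tr t(1)] t(2) ab] by blast
  have wc: "w \<noteq> c" "w \<noteq> d" using ne w by auto
  note g = Qd_geo[OF tr q]
  obtain m where m: "m \<in> open_segment a b" "m \<in> open_segment c d" using Qd_m[OF tr q] by blast
  have ncw: "\<not> collinear {a,b,w}" using tri_nc[OF tr t(1)] w by simp
  have s1: "{a,b,c} \<in> T" "{a,b,d} \<in> T" using q unfolding Qd_def by blast+
  have "convex hull {a,b,w} \<inter> convex hull {a,b,c} = convex hull ({a,b,w} \<inter> {a,b,c})"
    using tri_ff[OF tr t(1) s1(1)] ne w by simp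
  also have "{a,b,w} \<inter> {a,b,c} = {a,b}" using wc w q unfolding Qd_def by auto
  finally have f1: "convex hull {a,b,w} \<inter> convex hull {a,b,c} \<subseteq> closed_segment a b"
    by (simp add: segment_convex_hull)
  have "convex hull {a,b,w} \<inter> convex hull {a,b,d} = convex hull ({a,b,w} \<inter> {a,b,d})"
    using tri_ff[OF tr t(1) s1(2)] ne w by simp
  also have "{a,b,w} \<inter> {a,b,d} = {a,b}" using wc w q unfolding Qd_def by auto
  finally have f2: "convex hull {a,b,w} \<inter> convex hull {a,b,d} \<subseteq> closed_segment a b"
    by (simp add: segment_convex_hull)
  show False using third_tri[OF g(1) g(2) ncw m f1 f2] .
qed

lemma no_cross:
  assumes tr: "triangulation P T" and q: "Qd T a b c d" and t: "t \<in> T" "{c,d} \<subseteq> t"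
  shows False
proof -
  have cd: "c \<noteq> d" using q unfolding Qd_def by blast
  obtain w where w: "t = {c,d,w}" "w \<noteq> c" "w \<noteq> d" using card3_sup[OF tri_card[OF tr t(1)] t(2) cd] by blast
  note g = Qd_geo[OF tr q]
  obtain m where m: "m \<in> open_segment a b" "m \<in> open_segment c d" using Qd_m[OF tr q] by blast
  have s1: "{a,b,c} \<in> T" using q unfolding Qd_def by blast
  have "t \<noteq> {a,b,c}" using w q unfolding Qd_def by auto
  then have ff: "convex hull t \<inter> convex hull {a,b,c} = convex hull (t \<inter> {a,b,c})"
    using tri_ff[OF tr t(1) s1] by simp
  have "m \<in> convex hull t"
    using seg_in_hull3[of c d w] open_sub_closed[OF m(2)] w(1) by blast
  moreover have "m \<in> convex hull {a,b,c}"
    using seg_in_hull3[of a b c] open_sub_closed[OF m(1)] by blast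
  ultimately have mi: "m \<in> convex hull (t \<inter> {a,b,c})" using ff by blast
  consider "w = a" | "w = b" | "w \<noteq> a \<and> w \<noteq> b" by blast
  then show False
  proof cases
    case 1
    then have "t \<inter> {a,b,c} = {a,c}" using w q unfolding Qd_def by auto
    then have "m \<in> closed_segment a c" using mi by (simp add: segment_convex_hull)
    then show False using seg_not_cross[OF g(1) m(1)] by blast
  next
    case 2
    then have "t \<inter> {a,b,c} = {b,c}" using w q unfolding Qd_def by auto
    then have "m \<in> closed_segment b c" using mi by (simp add: segment_convex_hull)
    moreover have "\<not> collinear {b,a,c}" using g(1) by (simp add: insert_commute)
    moreover have "m \<in> open_segment b a" using m(1) by (simp add: open_segment_commute)
    ultimately show False using seg_not_cross by blast
  next
    case 3
    then have "t \<inter> {a,b,c} = {c}" using w q unfolding Qd_def by auto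
    then have "m = c" using mi by simp
    then show False using m(2) unfolding open_segment_def by simp
  qed
qed


lemma new_old_half:
  fixes a b c d :: pt
  assumes ff: "convex hull {a,b,c} \<inter> convex hull t = convex hull ({a,b,c} \<inter> t)"
    and nab: "\<not> {a,b} \<subseteq> t" and z: "z \<in> convex hull {a,b,c}" "z \<in> convex hull t"
    and zacd: "z \<in> convex hull {a,c,d}"
    and segf: "\<And>y. y \<in> closed_segment b c \<Longrightarrow> y \<in> convex hull {a,c,d} \<Longrightarrow> y = c"
    and bc: "b \<noteq> c"
  shows "z \<in> convex hull ({a,c,d} \<inter> t)"
proof -
  have zS: "z \<in> convex hull ({a,b,c} \<inter> t)" using ff z by blast
  show ?thesis
  proof (cases "b \<in> t")
    case False
    then have "{a,b,c} \<inter> t \<subseteq> {a,c,d} \<inter> t" by auto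
    then show ?thesis using zS hull_mono by blast
  next
    case True
    then have "a \<notin> t" using nab by auto
    then have S: "{a,b,c} \<inter> t \<subseteq> {b,c}" by auto
    then have "z \<in> closed_segment b c" using zS hull_mono[OF S] by (auto simp: segment_convex_hull)
    then have zc: "z = c" using segf zacd by blast
    have "c \<in> t"
    proof (rule ccontr)
      assume "c \<notin> t"
      then have "{a,b,c} \<inter> t \<subseteq> {b}" using S by auto
      then have "z \<in> convex hull {b}" using zS hull_mono by blast
      then show False using zc bc by simp
    qed
    then show ?thesis using zc by (simp add: hull_inc)
  qed
qed


lemma new_old:
  assumes tr: "triangulation P T" and q: "Qd T a b c d" and t: "t \<in> T" "\<not> {a,b} \<subseteq> t"
  shows "convex hull {a,c,d} \<inter> convex hull t = convex hull ({a,c,d} \<inter> t)"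
proof
  show "convex hull ({a,c,d} \<inter> t) \<subseteq> convex hull {a,c,d} \<inter> convex hull t"
    by (simp add: hull_mono)
next
  note g = Qd_geo[OF tr q]
  obtain m where m: "m \<in> open_segment a b" "m \<in> open_segment c d" using Qd_m[OF tr q] by blast
  have q': "Qd T a b d c" using Qd_swap_cd[OF q] .
  note g' = Qd_geo[OF tr q']
  have m': "m \<in> open_segment d c" using m(2) by (simp add: open_segment_commute)
  have s: "{a,b,c} \<in> T" "{a,b,d} \<in> T" using q unfolding Qd_def by blast+
  have ff1: "convex hull {a,b,c} \<inter> convex hull t = convex hull ({a,b,c} \<inter> t)"
    using tri_ff[OF tr s(1) t(1)] t(2) by auto
  have ff2: "convex hull {a,b,d} \<inter> convex hull t = convex hull ({a,b,d} \<inter> t)"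
    using tri_ff[OF tr s(2) t(1)] t(2) by auto
  have cvx: "convex (convex hull {a,b,c} \<union> convex hull {a,b,d})" using q unfolding Qd_def by blast
  have seg1: "\<And>y. y \<in> closed_segment b c \<Longrightarrow> y \<in> convex hull {a,c,d} \<Longrightarrow> y = c"
    using quad_seg[OF g(1) g(2) m(1) m(2) g(3)] by blast
  have seg2: "\<And>y. y \<in> closed_segment b d \<Longrightarrow> y \<in> convex hull {a,d,c} \<Longrightarrow> y = d"
    using quad_seg[OF g'(1) g'(2) m(1) m' g'(3)] by blast
  have bcd: "b \<noteq> c" "b \<noteq> d" using q unfolding Qd_def by blast+
  show "convex hull {a,c,d} \<inter> convex hull t \<subseteq> convex hull ({a,c,d} \<inter> t)"
  proof
    fix z assume z: "z \<in> convex hull {a,c,d} \<inter> convex hull t"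
    then have "z \<in> convex hull {a,b,c} \<or> z \<in> convex hull {a,b,d}" using quad_sub[OF cvx] by blast
    then show "z \<in> convex hull ({a,c,d} \<inter> t)"
    proof
      assume "z \<in> convex hull {a,b,c}"
      then show ?thesis using new_old_half[OF ff1 t(2) _ _ _ seg1 bcd(1)] z by blast
    next
      assume zz: "z \<in> convex hull {a,b,d}"
      have "z \<in> convex hull {a,d,c}" using z by (simp add: insert_commute)
      then have "z \<in> convex hull ({a,d,c} \<inter> t)" using new_old_half[OF ff2 t(2) zz _ _ seg2 bcd(2)] z by blast
      then show ?thesis by (simp add: insert_commute)
    qed
  qed
qed


lemma flip_tri:
  assumes tr: "triangulation P T" and q: "Qd T a b c d"
  shows "triangulation P ((T - {t\<in>T. {a,b} \<subseteq> t}) \<union> {{a,c,d},{b,c,d}})"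
    (is "triangulation P ?T'")
proof -
  have dist: "a \<noteq> b" "a \<noteq> c" "a \<noteq> d" "b \<noteq> c" "b \<noteq> d" "c \<noteq> d" using q unfolding Qd_def by blast+
  have s: "{a,b,c} \<in> T" "{a,b,d} \<in> T" using q unfolding Qd_def by blast+
  have abcdP: "a \<in> P" "b \<in> P" "c \<in> P" "d \<in> P" using tri_sub[OF tr s(1)] tri_sub[OF tr s(2)] by auto
  have finP: "finite P" and finT: "finite T" using tr unfolding triangulation_def by blast+
  have cov: "(\<Union>t\<in>T. convex hull t) = convex hull P" and vs: "\<Union>T = P"
    using tr unfolding triangulation_def by blast+
  have ncn: "\<not> collinear {a,c,d}" "\<not> collinear {b,c,d}" using q unfolding Qd_def by blast+
  note g = Qd_geo[OF tr q]
  obtain m where m: "m \<in> open_segment a b" "m \<in> open_segment c d" using Qd_m[OF tr q] by blast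
  have istri: "\<forall>t\<in>?T'. is_triangle P t"
  proof
    fix t assume "t \<in> ?T'"
    then consider "t \<in> T" | "t = {a,c,d}" | "t = {b,c,d}" by blast
    then show "is_triangle P t"
    proof cases
      case 1 then show ?thesis using tri_is_tri[OF tr] by blast
    next
      case 2 then show ?thesis unfolding is_triangle_def using abcdP dist ncn by auto
    next
      case 3 then show ?thesis unfolding is_triangle_def using abcdP dist ncn by auto
    qed
  qed
  have cover: "(\<Union>t\<in>?T'. convex hull t) = convex hull P"
  proof
    show "(\<Union>t\<in>?T'. convex hull t) \<subseteq> convex hull P"
    proof
      fix z assume "z \<in> (\<Union>t\<in>?T'. convex hull t)"
      then obtain t where t: "t \<in> ?T'" "z \<in> convex hull t" by blast
      have "is_triangle P t" using istri t(1) by (rule bspec)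
      then have "t \<subseteq> P" unfolding is_triangle_def by (elim conjE)
      then have "convex hull t \<subseteq> convex hull P" by (rule hull_mono)
      then show "z \<in> convex hull P" using t(2) by (rule subsetD)
    qed
  next
    show "convex hull P \<subseteq> (\<Union>t\<in>?T'. convex hull t)"
    proof
      fix z assume "z \<in> convex hull P"
      then have "z \<in> (\<Union>t\<in>T. convex hull t)" using cov by simp
      then obtain t where t: "t \<in> T" "z \<in> convex hull t" by (rule UN_E)
      show "z \<in> (\<Union>t\<in>?T'. convex hull t)"
      proof (cases "{a,b} \<subseteq> t")
        case False
        then have "t \<in> ?T'" using t(1) by blast
        then show ?thesis using t(2) by (rule UN_I)
      next
        case True
        then have "t = {a,b,c} \<or> t = {a,b,d}" using only_two[OF tr q t(1)] by blast
        then have "z \<in> convex hull {a,b,c} \<union> convex hull {a,b,d}" using t(2) by (elim disjE) simp_all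
        then have zz: "z \<in> convex hull {a,c,d} \<union> convex hull {b,c,d}"
          using quad_cover[OF g(1) g(2) m] by (rule rev_subsetD)
        have m1: "{a,c,d} \<in> ?T'" by simp
        have m2: "{b,c,d} \<in> ?T'" by simp
        from zz show ?thesis
        proof (elim UnE)
          assume "z \<in> convex hull {a,c,d}" then show ?thesis by (rule UN_I[OF m1])
        next
          assume "z \<in> convex hull {b,c,d}" then show ?thesis by (rule UN_I[OF m2])
        qed
      qed
    qed
  qed
  have acd_bcd: "convex hull {a,c,d} \<inter> convex hull {b,c,d} = convex hull ({a,c,d} \<inter> {b,c,d})"
  proof -
    have "{a,c,d} \<inter> {b,c,d} = {c,d}" using dist by auto
    moreover have "convex hull {a,c,d} \<inter> convex hull {b,c,d} \<subseteq> convex hull {c,d}"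
    proof
      fix z assume "z \<in> convex hull {a,c,d} \<inter> convex hull {b,c,d}"
      then have "z \<in> closed_segment c d" using quad_new_inter[OF g(1) g(2) m g(3)] by blast
      then show "z \<in> convex hull {c,d}" by (simp add: segment_convex_hull)
    qed
    moreover have "convex hull {c,d} \<subseteq> convex hull {a,c,d} \<inter> convex hull {b,c,d}"
      by (intro Int_greatest hull_mono) auto
    ultimately show ?thesis by (simp only:)
  qed
  have no1: "convex hull {a,c,d} \<inter> convex hull t = convex hull ({a,c,d} \<inter> t)"
    if "t \<in> T" "\<not> {a,b} \<subseteq> t" for t
    using new_old[OF tr q that] .
  have no2: "convex hull {b,c,d} \<inter> convex hull t = convex hull ({b,c,d} \<inter> t)"
    if "t \<in> T" "\<not> {a,b} \<subseteq> t" for t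
  proof -
    have "\<not> {b,a} \<subseteq> t" using that by auto
    then show ?thesis using new_old[OF tr Qd_swap_ab[OF q] that(1)] by blast
  qed
  have ffall: "\<forall>t1\<in>?T'. \<forall>t2\<in>?T'. t1 \<noteq> t2 \<longrightarrow> convex hull t1 \<inter> convex hull t2 = convex hull (t1 \<inter> t2)"
  proof (intro ballI impI)
    fix t1 t2 assume t1: "t1 \<in> ?T'" and t2: "t2 \<in> ?T'" and ne: "t1 \<noteq> t2"
    have mem: "\<And>t. t \<in> ?T' \<Longrightarrow> (t \<in> T \<and> \<not> {a,b} \<subseteq> t) \<or> t = {a,c,d} \<or> t = {b,c,d}" by blast
    have c1: "(t1 \<in> T \<and> \<not> {a,b} \<subseteq> t1) \<or> t1 = {a,c,d} \<or> t1 = {b,c,d}" using mem[OF t1] .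
    have c2: "(t2 \<in> T \<and> \<not> {a,b} \<subseteq> t2) \<or> t2 = {a,c,d} \<or> t2 = {b,c,d}" using mem[OF t2] .
    have sym_acd: "convex hull t \<inter> convex hull {a,c,d} = convex hull (t \<inter> {a,c,d})"
      if "t \<in> T" "\<not> {a,b} \<subseteq> t" for t using no1[OF that] by (simp add: Int_commute)
    have sym_bcd: "convex hull t \<inter> convex hull {b,c,d} = convex hull (t \<inter> {b,c,d})"
      if "t \<in> T" "\<not> {a,b} \<subseteq> t" for t using no2[OF that] by (simp add: Int_commute)
    have acd_bcd': "convex hull {b,c,d} \<inter> convex hull {a,c,d} = convex hull ({b,c,d} \<inter> {a,c,d})"
      using acd_bcd by (simp add: Int_commute)
    show "convex hull t1 \<inter> convex hull t2 = convex hull (t1 \<inter> t2)"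
    proof (rule disjE[OF c1])
      assume h1: "t1 \<in> T \<and> \<not> {a,b} \<subseteq> t1"
      show ?thesis
      proof (rule disjE[OF c2])
        assume h2: "t2 \<in> T \<and> \<not> {a,b} \<subseteq> t2"
        show ?thesis using tri_ff[OF tr conjunct1[OF h1] conjunct1[OF h2] ne] .
      next
        assume "t2 = {a,c,d} \<or> t2 = {b,c,d}"
        then show ?thesis
        proof
          assume "t2 = {a,c,d}" then show ?thesis using sym_acd[OF conjunct1[OF h1] conjunct2[OF h1]] by simp
        next
          assume "t2 = {b,c,d}" then show ?thesis using sym_bcd[OF conjunct1[OF h1] conjunct2[OF h1]] by simp
        qed
      qed
    next
      assume "t1 = {a,c,d} \<or> t1 = {b,c,d}"
      then show ?thesis
      proof
        assume e1: "t1 = {a,c,d}"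
        show ?thesis
        proof (rule disjE[OF c2])
          assume h2: "t2 \<in> T \<and> \<not> {a,b} \<subseteq> t2"
          show ?thesis using no1[OF conjunct1[OF h2] conjunct2[OF h2]] e1 by simp
        next
          assume "t2 = {a,c,d} \<or> t2 = {b,c,d}"
          then have "t2 = {b,c,d}" using ne e1 by blast
          then show ?thesis using acd_bcd e1 by simp
        qed
      next
        assume e1: "t1 = {b,c,d}"
        show ?thesis
        proof (rule disjE[OF c2])
          assume h2: "t2 \<in> T \<and> \<not> {a,b} \<subseteq> t2"
          show ?thesis using no2[OF conjunct1[OF h2] conjunct2[OF h2]] e1 by simp
        next
          assume "t2 = {a,c,d} \<or> t2 = {b,c,d}"
          then have "t2 = {a,c,d}" using ne e1 by blast
          then show ?thesis using acd_bcd' e1 by simp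
        qed
      qed
    qed
  qed
  have vert: "\<Union>?T' = P"
  proof
    show "\<Union>?T' \<subseteq> P"
    proof
      fix v assume "v \<in> \<Union>?T'"
      then obtain t where t: "t \<in> ?T'" "v \<in> t" by (rule UnionE)
      have "is_triangle P t" using istri t(1) by (rule bspec)
      then have "t \<subseteq> P" unfolding is_triangle_def by (elim conjE)
      then show "v \<in> P" using t(2) by (rule subsetD)
    qed
  next
    show "P \<subseteq> \<Union>?T'"
    proof
      fix v assume "v \<in> P"
      then have "v \<in> \<Union>T" using vs by simp
      then obtain t where t: "t \<in> T" "v \<in> t" by (rule UnionE)
      show "v \<in> \<Union>?T'"
      proof (cases "{a,b} \<subseteq> t")
        case False
        then have "t \<in> ?T'" using t(1) by blast
        then show ?thesis using t(2) by (rule UnionI)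
      next
        case True
        then have "t = {a,b,c} \<or> t = {a,b,d}" using only_two[OF tr q t(1)] by blast
        then have "v \<in> {a,c,d} \<or> v \<in> {b,c,d}" using t(2) by auto
        moreover have m1: "{a,c,d} \<in> ?T'" by simp
        moreover have m2: "{b,c,d} \<in> ?T'" by simp
        ultimately show ?thesis by (meson UnionI)
      qed
    qed
  qed
  have fT': "finite ?T'" using finT by simp
  show ?thesis unfolding triangulation_def
    using finP fT' istri cover ffall vert by (intro conjI)
qed


definition newt :: "flip \<Rightarrow> triangle set" where
  "newt f = (\<lambda>a. insert a (phi f)) ` eps f"

lemma perform_alt: "perform T f = {t\<in>T. \<not> eps f \<subseteq> t} \<union> newt f"
  unfolding perform_def newt_def by blast

lemma newt_sub_perform: "newt f \<subseteq> perform T f"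
  unfolding perform_alt by blast

lemma newt_eq: "eps f = {a,b} \<Longrightarrow> phi f = {c,d} \<Longrightarrow> newt f = {{a,c,d},{b,c,d}}"
  unfolding newt_def by auto

lemma Qd_transfer: "Qd T1 a b c d \<Longrightarrow> {a,b,c} \<in> T2 \<Longrightarrow> {a,b,d} \<in> T2 \<Longrightarrow> Qd T2 a b c d"
  unfolding Qd_def by blast

lemma adm_decomp:
  assumes tr: "triangulation P T" and ad: "admissible T f" and tr2: "triangulation P (perform T f)"
  obtains a b c d where "eps f = {a,b}" "phi f = {c,d}" "Qd T a b c d"
proof -
  from ad obtain t1 t2 where t: "t1 \<in> T" "t2 \<in> T" "t1 \<noteq> t2" "eps f \<subseteq> t1" "eps f \<subseteq> t2"
    "convex (convex hull t1 \<union> convex hull t2)" "phi f = (t1 \<union> t2) - eps f" and e: "eps f \<in> edges T"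
    unfolding admissible_def by blast
  have "card (eps f) = 2" using e unfolding edges_def by blast
  then obtain a b where ab: "eps f = {a,b}" "a \<noteq> b" by (meson card_2_iff)
  obtain c where c: "t1 = {a,b,c}" "c \<noteq> a" "c \<noteq> b" using card3_sup[OF tri_card[OF tr t(1)], of a b] t(4) ab by blast
  obtain d where d: "t2 = {a,b,d}" "d \<noteq> a" "d \<noteq> b" using card3_sup[OF tri_card[OF tr t(2)], of a b] t(5) ab by blast
  have cd: "c \<noteq> d" using t(3) c d by auto
  have ph: "phi f = {c,d}" using t(7) ab c d by auto
  have nt: "newt f = {{a,c,d},{b,c,d}}" using newt_eq[OF ab(1) ph] .
  have "{a,c,d} \<in> perform T f" "{b,c,d} \<in> perform T f" using newt_sub_perform[of f T] nt by auto
  then have nc: "\<not> collinear {a,c,d}" "\<not> collinear {b,c,d}" using tri_nc[OF tr2] by blast+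
  have "Qd T a b c d" unfolding Qd_def using t c d cd ab nc by auto
  then show ?thesis using that ab(1) ph by blast
qed

locale swapctx =
  fixes P :: "pt set" and H :: "triangle set" and x y :: flip
  assumes trH: "triangulation P H"
    and adx: "admissible H x"
    and tr1: "triangulation P (perform H x)"
    and ady: "admissible (perform H x) y"
    and tr2: "triangulation P (perform (perform H x) y)"
    and indep: "\<forall>u\<in>newt x. \<not> eps y \<subseteq> u"
begin

lemma x_dec: obtains a b c d where "eps x = {a,b}" "phi x = {c,d}" "Qd H a b c d"
  using adm_decomp[OF trH adx tr1] by blast

lemma y_dec: obtains a b c d where "eps y = {a,b}" "phi y = {c,d}" "Qd H a b c d"
proof -
  obtain a b c d where abcd: "eps y = {a,b}" "phi y = {c,d}" "Qd (perform H x) a b c d"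
    using adm_decomp[OF tr1 ady tr2] by blast
  have "{a,b,c} \<in> perform H x" "{a,b,d} \<in> perform H x" using abcd(3) unfolding Qd_def by blast+
  moreover have "{a,b,c} \<notin> newt x" "{a,b,d} \<notin> newt x" using indep abcd(1) by auto
  ultimately have "{a,b,c} \<in> H" "{a,b,d} \<in> H" unfolding perform_alt by blast+
  then show ?thesis using that abcd Qd_transfer by blast
qed

lemma K0: "eps y \<noteq> eps x"
proof
  assume eq: "eps y = eps x"
  obtain a b c d where abcd: "eps y = {a,b}" "phi y = {c,d}" "Qd (perform H x) a b c d"
    using adm_decomp[OF tr1 ady tr2] by blast
  have s: "{a,b,c} \<in> perform H x" using abcd(3) unfolding Qd_def by blast
  have "{a,b,c} \<notin> newt x" using indep abcd(1) by auto
  then have "{a,b,c} \<in> {t\<in>H. \<not> eps x \<subseteq> t}" using s unfolding perform_alt by blast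
  then show False using eq abcd(1) by auto
qed

lemma K1:
  assumes t: "t \<in> H" "eps x \<subseteq> t" "eps y \<subseteq> t" shows False
proof -
  obtain a b c d where x: "eps x = {a,b}" "phi x = {c,d}" "Qd H a b c d" using x_dec by blast
  obtain a' b' where y: "eps y = {a',b'}" "a' \<noteq> b'"
    using y_dec by (metis Qd_def)
  have nx: "newt x = {{a,c,d},{b,c,d}}" using newt_eq[OF x(1) x(2)] .
  have tt: "t = {a,b,c} \<or> t = {a,b,d}" using only_two[OF trH x(3) t(1)] t(2) x(1) by simp
  have ne: "{a',b'} \<noteq> {a,b}" using K0 x(1) y(1) by simp
  have "{a',b'} \<subseteq> {a,c,d} \<or> {a',b'} \<subseteq> {b,c,d}"
    using tt t(3) y ne by (auto simp: doubleton_eq_iff)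
  then show False using indep nx y(1) by auto
qed

lemma K2:
  assumes u: "u \<in> newt y" "eps x \<subseteq> u" shows False
proof -
  obtain a b c d where x: "eps x = {a,b}" "phi x = {c,d}" "Qd H a b c d" using x_dec by blast
  obtain a' b' c' d' where y: "eps y = {a',b'}" "phi y = {c',d'}" "Qd H a' b' c' d'" using y_dec by blast
  have ab: "a \<noteq> b" using x(3) unfolding Qd_def by blast
  have ny: "newt y = {{a',c',d'},{b',c',d'}}" using newt_eq[OF y(1) y(2)] .
  have s: "{a',b',c'} \<in> H" "{a',b',d'} \<in> H" using y(3) unfolding Qd_def by blast+
  have "{c',d'} \<subseteq> {a,b} \<or> {a,b} \<subseteq> {a',b',c'} \<or> {a,b} \<subseteq> {a',b',d'}"
    using u ny x(1) ab by auto
  then show False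
  proof (elim disjE)
    assume "{c',d'} \<subseteq> {a,b}"
    then have "{c',d'} \<subseteq> {a,b,c}" by auto
    moreover have "{a,b,c} \<in> H" using x(3) unfolding Qd_def by blast
    ultimately show False using no_cross[OF trH y(3)] by blast
  next
    assume "{a,b} \<subseteq> {a',b',c'}"
    then show False using K1[OF s(1)] x(1) y(1) by auto
  next
    assume "{a,b} \<subseteq> {a',b',d'}"
    then show False using K1[OF s(2)] x(1) y(1) by auto
  qed
qed

lemma ady_H: "admissible H y"
proof -
  from ady obtain t1 t2 where t: "t1 \<in> perform H x" "t2 \<in> perform H x" "t1 \<noteq> t2" "eps y \<subseteq> t1" "eps y \<subseteq> t2"
    "convex (convex hull t1 \<union> convex hull t2)" "phi y = (t1 \<union> t2) - eps y" and e: "eps y \<in> edges (perform H x)"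
    unfolding admissible_def by blast
  have "t1 \<notin> newt x" "t2 \<notin> newt x" using indep t(4,5) by auto
  then have h: "t1 \<in> H" "t2 \<in> H" using t(1,2) unfolding perform_alt by blast+
  have "eps y \<in> edges H" using e h t(4) unfolding edges_def by blast
  then show ?thesis unfolding admissible_def using h t by blast
qed

lemma trHy: "triangulation P (perform H y)"
proof -
  obtain a b c d where y: "eps y = {a,b}" "phi y = {c,d}" "Qd H a b c d" using y_dec by blast
  have "perform H y = (H - {t\<in>H. {a,b} \<subseteq> t}) \<union> {{a,c,d},{b,c,d}}"
    unfolding perform_alt newt_eq[OF y(1) y(2)] y(1) by blast
  then show ?thesis using flip_tri[OF trH y(3)] by simp
qed

lemma adx_Hy: "admissible (perform H y) x"
proof -
  from adx obtain t1 t2 where t: "t1 \<in> H" "t2 \<in> H" "t1 \<noteq> t2" "eps x \<subseteq> t1" "eps x \<subseteq> t2"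
    "convex (convex hull t1 \<union> convex hull t2)" "phi x = (t1 \<union> t2) - eps x" and e: "eps x \<in> edges H"
    unfolding admissible_def by blast
  have "\<not> eps y \<subseteq> t1" "\<not> eps y \<subseteq> t2" using K1 t by blast+
  then have h: "t1 \<in> perform H y" "t2 \<in> perform H y" using t(1,2) unfolding perform_alt by blast+
  have "eps x \<in> edges (perform H y)" using e h t(4) unfolding edges_def by blast
  then show ?thesis unfolding admissible_def using h t by blast
qed

lemma comm: "perform (perform H y) x = perform (perform H x) y"
proof -
  have A: "\<forall>u\<in>newt y. \<not> eps x \<subseteq> u" using K2 by blast
  show ?thesis unfolding perform_alt using A indep by blast
qed

end


lemma tri_after_0 [simp]: "tri_after T G 0 = T"
  unfolding tri_after_def by simp

lemma tri_after_Suc: "i < length G \<Longrightarrow> tri_after T G (Suc i) = perform (tri_after T G i) (G ! i)"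
  unfolding tri_after_def by (simp add: take_Suc_conv_app_nth)

lemma valid_tri: "valid_seq P T G \<Longrightarrow> i \<le> length G \<Longrightarrow> triangulation P (tri_after T G i)"
proof (cases i)
  case 0 then show "valid_seq P T G \<Longrightarrow> i \<le> length G \<Longrightarrow> ?thesis" unfolding valid_seq_def by simp
next
  case (Suc j) then show "valid_seq P T G \<Longrightarrow> i \<le> length G \<Longrightarrow> ?thesis" unfolding valid_seq_def by simp
qed

lemma valid_adm: "valid_seq P T G \<Longrightarrow> i < length G \<Longrightarrow> admissible (tri_after T G i) (G ! i)"
  unfolding valid_seq_def by blast

definition swp :: "nat \<Rightarrow> 'a list \<Rightarrow> 'a list" where
  "swp k G = G[k := G ! Suc k, Suc k := G ! k]"

definition tr :: "nat \<Rightarrow> nat \<Rightarrow> nat" where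
  "tr k i = (if i = k then Suc k else if i = Suc k then k else i)"

lemma swp_len [simp]: "length (swp k G) = length G"
  unfolding swp_def by simp

lemma swp_nth: "Suc k < length G \<Longrightarrow> i < length G \<Longrightarrow> swp k G ! i = G ! tr k i"
  unfolding swp_def tr_def by (auto simp: nth_list_update)

lemma swp_map: "Suc k < length xs \<Longrightarrow> map f (swp k xs) = swp k (map f xs)"
  unfolding swp_def by (simp add: map_update)

definition link :: "flip list \<Rightarrow> nat \<Rightarrow> nat \<Rightarrow> bool" where
  "link G i j \<longleftrightarrow> i < j \<and> j < length G \<and>
     (\<exists>t\<in>newt (G ! i). eps (G ! j) \<subseteq> t \<and> (\<forall>p. i < p \<and> p < j \<longrightarrow> \<not> eps (G ! p) \<subseteq> t))"

lemma survive:
  assumes "i < j" "j \<le> length G" "t \<in> newt (G ! i)" "\<forall>p. i < p \<and> p < j \<longrightarrow> \<not> eps (G ! p) \<subseteq> t"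
  shows "t \<in> tri_after T G j"
  using assms
proof (induction j)
  case 0 then show ?case by simp
next
  case (Suc j)
  show ?case
  proof (cases "i = j")
    case True
    have jl: "j < length G" using Suc.prems by simp
    have "t \<in> perform (tri_after T G j) (G ! j)"
      using Suc.prems(3) True newt_sub_perform[of "G ! j" "tri_after T G j"] by blast
    then show ?thesis using tri_after_Suc[OF jl] by simp
  next
    case False
    then have ij: "i < j" using Suc.prems by simp
    have "t \<in> tri_after T G j" using Suc.IH[OF ij] Suc.prems by auto
    moreover have "\<not> eps (G ! j) \<subseteq> t" using Suc.prems ij by auto
    ultimately show ?thesis using tri_after_Suc[of j G T] Suc.prems unfolding perform_alt by auto
  qed
qed

lemma link_adj:
  assumes v: "valid_seq P T F" and l: "link F i j"
  shows "adj T F i j"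
proof -
  from l obtain t where ij: "i < j" "j < length F" and t: "t \<in> newt (F ! i)" "eps (F ! j) \<subseteq> t"
    and sv: "\<forall>p. i < p \<and> p < j \<longrightarrow> \<not> eps (F ! p) \<subseteq> t"
    unfolding link_def by blast
  have tj: "t \<in> tri_after T F j" using survive[OF ij(1) _ t(1) sv] ij by simp
  have il: "i < length F" using ij by simp
  have t1: "triangulation P (tri_after T F i)" using valid_tri[OF v] il by simp
  have t2: "triangulation P (perform (tri_after T F i) (F ! i))"
    using valid_tri[OF v, of "Suc i"] il tri_after_Suc[OF il] by simp
  obtain a b c d where dec: "eps (F ! i) = {a,b}" "phi (F ! i) = {c,d}" "Qd (tri_after T F i) a b c d"
    using adm_decomp[OF t1 valid_adm[OF v il] t2] by blast
  have cphi: "card (phi (F ! i)) = 2" using dec unfolding Qd_def by simp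
  have ceps: "card (eps (F ! j)) = 2" using valid_adm[OF v ij(2)] unfolding admissible_def edges_def by blast
  have phit: "phi (F ! i) \<subseteq> t" using t(1) unfolding newt_def by auto
  have "phi (F ! i) = eps (F ! j) \<or> share_triangle (tri_after T F j) (phi (F ! i)) (eps (F ! j))"
    unfolding share_triangle_def using cphi ceps phit t(2) tj by blast
  moreover have "\<not> (\<exists>p. i < p \<and> p < j \<and> eps (F ! p) = phi (F ! i))" using sv phit by auto
  ultimately show ?thesis unfolding adj_def using ij by blast
qed

lemma swap_valid:
  assumes v: "valid_seq P T G" and k: "Suc k < length G"
    and ind: "\<forall>u\<in>newt (G ! k). \<not> eps (G ! Suc k) \<subseteq> u"
  shows "valid_seq P T (swp k G)"
    "\<And>i. i \<le> length G \<Longrightarrow> i \<noteq> Suc k \<Longrightarrow> tri_after T (swp k G) i = tri_after T G i"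
    "tri_after T (swp k G) (Suc k) = perform (tri_after T G k) (G ! Suc k)"
    "swapctx P (tri_after T G k) (G ! k) (G ! Suc k)"
proof -
  let ?H = "tri_after T G k" and ?x = "G ! k" and ?y = "G ! Suc k" and ?G' = "swp k G"
  have kl: "k < length G" using k by simp
  have S1: "tri_after T G (Suc k) = perform ?H ?x" using tri_after_Suc[OF kl] .
  have S2: "tri_after T G (Suc (Suc k)) = perform (perform ?H ?x) ?y" using tri_after_Suc[OF k] S1 by simp
  show sc: "swapctx P ?H ?x ?y"
    unfolding swapctx_def
    using valid_tri[OF v, of k] valid_adm[OF v kl] valid_tri[OF v, of "Suc k"] valid_adm[OF v k]
      valid_tri[OF v, of "Suc (Suc k)"] S1 S2 ind k by auto
  have g'k: "?G' ! k = ?y" and g'k1: "?G' ! Suc k = ?x" using swp_nth[OF k] k unfolding tr_def by auto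
  have g'o: "?G' ! i = G ! i" if "i \<noteq> k" "i \<noteq> Suc k" "i < length G" for i
    using swp_nth[OF k that(3)] that unfolding tr_def by simp
  have low: "tri_after T ?G' i = tri_after T G i" if "i \<le> k" for i
    using that
  proof (induction i)
    case 0 then show ?case by simp
  next
    case (Suc i)
    then have "i < length G" "i \<noteq> k" "i \<noteq> Suc k" using k by auto
    then show ?case using Suc tri_after_Suc[of i G T] tri_after_Suc[of i ?G' T] g'o by simp
  qed
  have mid: "tri_after T ?G' (Suc k) = perform ?H ?y"
    using tri_after_Suc[of k ?G' T] kl low[of k] g'k by simp
  then show "tri_after T ?G' (Suc k) = perform ?H ?y" .
  have mid2: "tri_after T ?G' (Suc (Suc k)) = tri_after T G (Suc (Suc k))"
    using tri_after_Suc[of "Suc k" ?G' T] k mid g'k1 S2 swapctx.comm[OF sc] by simp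
  have high: "tri_after T ?G' i = tri_after T G i" if "Suc (Suc k) \<le> i" "i \<le> length G" for i
    using that
  proof (induction i)
    case 0 then show ?case by simp
  next
    case (Suc i)
    show ?case
    proof (cases "Suc i = Suc (Suc k)")
      case True then show ?thesis using mid2 by simp
    next
      case False
      then have "Suc (Suc k) \<le> i" "i < length G" using Suc.prems by auto
      then show ?thesis using Suc.IH tri_after_Suc[of i G T] tri_after_Suc[of i ?G' T] g'o by simp
    qed
  qed
  show same: "\<And>i. i \<le> length G \<Longrightarrow> i \<noteq> Suc k \<Longrightarrow> tri_after T ?G' i = tri_after T G i"
  proof -
    fix i assume "i \<le> length G" "i \<noteq> Suc k"
    then show "tri_after T ?G' i = tri_after T G i"
      using low high by (cases "i \<le> k") auto
  qed
  show "valid_seq P T ?G'"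
    unfolding valid_seq_def
  proof (intro conjI allI impI)
    show "triangulation P T" using v unfolding valid_seq_def by blast
  next
    fix i assume il: "i < length ?G'"
    then have il': "i < length G" by simp
    consider "i = k" | "i = Suc k" | "i \<noteq> k \<and> i \<noteq> Suc k" by blast
    then show "admissible (tri_after T ?G' i) (?G' ! i)"
    proof cases
      case 1 then show ?thesis using low[of k] g'k swapctx.ady_H[OF sc] by simp
    next
      case 2 then show ?thesis using mid g'k1 swapctx.adx_Hy[OF sc] by simp
    next
      case 3 then show ?thesis using same[of i] il' g'o[of i] valid_adm[OF v il'] by simp
    qed
  next
    fix i assume il: "i < length ?G'"
    then have il': "i < length G" by simp
    consider "i = k" | "i \<noteq> k" by blast
    then show "triangulation P (tri_after T ?G' (Suc i))"
    proof cases
      case 1 then show ?thesis using mid swapctx.trHy[OF sc] by simp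
    next
      case 2 then show ?thesis using same[of "Suc i"] il' valid_tri[OF v, of "Suc i"] by simp
    qed
  qed
qed

lemma link_swap:
  assumes v: "valid_seq P T G" and k: "Suc k < length G"
    and ind: "\<forall>u\<in>newt (G ! k). \<not> eps (G ! Suc k) \<subseteq> u"
    and l: "link (swp k G) i j"
  shows "link G (tr k i) (tr k j)"
proof -
  let ?G' = "swp k G"
  note sc = swap_valid(4)[OF v k ind]
  from l obtain t where ij: "i < j" "j < length G" and t: "t \<in> newt (?G' ! i)" "eps (?G' ! j) \<subseteq> t"
    and sv: "\<forall>p. i < p \<and> p < j \<longrightarrow> \<not> eps (?G' ! p) \<subseteq> t"
    unfolding link_def by auto
  have g: "?G' ! p = G ! tr k p" if "p < length G" for p using swp_nth[OF k that] .
  have kl: "k < length G" using k by simp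
  have gk: "?G' ! k = G ! Suc k" using g[OF kl] unfolding tr_def by simp
  have gk1: "?G' ! Suc k = G ! k" using g[OF k] unfolding tr_def by simp
  have go: "?G' ! p = G ! p" if "p \<noteq> k" "p \<noteq> Suc k" "p < length G" for p
    using g[OF that(3)] that unfolding tr_def by simp
  have il: "i < length G" using ij by simp
  have svo: "\<not> eps (G ! p) \<subseteq> t" if "i < p" "p < j" "p \<noteq> k" "p \<noteq> Suc k" for p
  proof -
    have "p < length G" using that ij by simp
    then have "?G' ! p = G ! p" using go that by blast
    then show ?thesis using sv that by metis
  qed
  consider (a) "i = k" "j = Suc k" | (b) "i = k" "j \<noteq> Suc k" | (c) "i = Suc k"
    | (d) "i < k" "j = k" | (e) "i < k" "j = Suc k"
    | (f) "i \<noteq> k" "i \<noteq> Suc k" "j \<noteq> k" "j \<noteq> Suc k" using ij by linarith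
  then show ?thesis
  proof cases
    case a
    then have "t \<in> newt (G ! Suc k)" "eps (G ! k) \<subseteq> t" using t gk gk1 by auto
    then show ?thesis using swapctx.K2[OF sc] by blast
  next
    case b
    then have j2: "Suc k < j" using ij by simp
    have "\<forall>p. Suc k < p \<and> p < j \<longrightarrow> \<not> eps (G ! p) \<subseteq> t"
      using svo b by auto
    moreover have "t \<in> newt (G ! Suc k)" "eps (G ! j) \<subseteq> t" using t gk go[of j] b j2 ij by auto
    moreover have "tr k i = Suc k" "tr k j = j" using b j2 unfolding tr_def by auto
    ultimately show ?thesis unfolding link_def using j2 ij by auto
  next
    case c
    then have j2: "Suc k < j" using ij by simp
    have "\<forall>p. Suc k < p \<and> p < j \<longrightarrow> \<not> eps (G ! p) \<subseteq> t"
      using svo c by auto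
    moreover have tx: "t \<in> newt (G ! k)" "eps (G ! j) \<subseteq> t" using t gk1 go[of j] c j2 ij by auto
    moreover have "\<not> eps (G ! Suc k) \<subseteq> t" using ind tx(1) by blast
    ultimately have "\<forall>p. k < p \<and> p < j \<longrightarrow> \<not> eps (G ! p) \<subseteq> t"
      by (metis Suc_lessI)
    moreover have "tr k i = k" "tr k j = j" using c j2 unfolding tr_def by auto
    ultimately show ?thesis unfolding link_def using j2 ij tx by auto
  next
    case d
    have sv2: "\<forall>p. i < p \<and> p < k \<longrightarrow> \<not> eps (G ! p) \<subseteq> t"
      using svo d by auto
    have ti: "t \<in> newt (G ! i)" using t go[of i] d il by auto
    have ty: "eps (G ! Suc k) \<subseteq> t" using t gk d by auto
    have "\<not> eps (G ! k) \<subseteq> t"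
    proof
      assume tx: "eps (G ! k) \<subseteq> t"
      have "t \<in> tri_after T G k" using survive[OF d(1) _ ti sv2] kl by simp
      then show False using swapctx.K1[OF sc _ tx ty] by blast
    qed
    then have "\<forall>p. i < p \<and> p < Suc k \<longrightarrow> \<not> eps (G ! p) \<subseteq> t"
      using sv2 by (metis less_antisym)
    moreover have "tr k i = i" "tr k j = Suc k" using d unfolding tr_def by auto
    ultimately show ?thesis unfolding link_def using d k ti ty by auto
  next
    case e
    have sv2: "\<forall>p. i < p \<and> p < k \<longrightarrow> \<not> eps (G ! p) \<subseteq> t"
      using svo e by auto
    have ti: "t \<in> newt (G ! i)" using t go[of i] e il by auto
    have tx: "eps (G ! k) \<subseteq> t" using t gk1 e by auto
    have "tr k i = i" "tr k j = k" using e unfolding tr_def by auto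
    then show ?thesis unfolding link_def using e kl ti tx sv2 by auto
  next
    case f
    have tij: "tr k i = i" "tr k j = j" using f unfolding tr_def by auto
    have ti: "t \<in> newt (G ! i)" using t go[of i] f il by auto
    have tj: "eps (G ! j) \<subseteq> t" using t go[of j] f ij by auto
    have "\<not> eps (G ! p) \<subseteq> t" if p: "i < p" "p < j" for p
    proof -
      consider "p = k" | "p = Suc k" | "p \<noteq> k" "p \<noteq> Suc k" by blast
      then show ?thesis
      proof cases
        case 1
        then have "Suc k < j" using p f by simp
        then have "\<not> eps (?G' ! Suc k) \<subseteq> t" using sv p 1 by simp
        then show ?thesis using gk1 1 by simp
      next
        case 2
        then have "i < k" using p f by simp
        then have "\<not> eps (?G' ! k) \<subseteq> t" using sv p 2 by simp
        then show ?thesis using gk 2 by simp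
      next
        case 3
        then show ?thesis using svo p by blast
      qed
    qed
    then show ?thesis unfolding link_def tij using ij ti tj by blast
  qed
qed


locale mainctx =
  fixes P :: "pt set" and T :: "triangle set" and F :: "flip list" and Cs :: "nat set list"
  assumes v: "valid_seq P T F" and dC: "distinct Cs" and sC: "set Cs = DF_components T F"
begin

abbreviation "n \<equiv> length F"
abbreviation "R \<equiv> (DF_arcs T F \<union> (DF_arcs T F)\<inverse>)\<^sup>*"

definition key :: "nat \<Rightarrow> nat" where
  "key k = (THE t. t < length Cs \<and> k \<in> Cs ! t)"

lemma R_sym: "(a, b) \<in> R \<Longrightarrow> (b, a) \<in> R"
  using sym_rtrancl[OF sym_Un_converse[of "DF_arcs T F"]] unfolding sym_def by blast

lemma cls: "t < length Cs \<Longrightarrow> \<exists>k<n. Cs ! t = R `` {k}"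
proof -
  assume "t < length Cs"
  then have "Cs ! t \<in> DF_components T F" using sC nth_mem by blast
  then show ?thesis unfolding DF_components_def quotient_def by auto
qed

lemma mem_ex: "k < n \<Longrightarrow> \<exists>t<length Cs. k \<in> Cs ! t"
proof -
  assume k: "k < n"
  have "R `` {k} \<in> set Cs" using sC k unfolding DF_components_def quotient_def by auto
  then obtain t where "t < length Cs" "Cs ! t = R `` {k}" by (metis in_set_conv_nth)
  then show ?thesis by auto
qed

lemma uniq: "t < length Cs \<Longrightarrow> s < length Cs \<Longrightarrow> k \<in> Cs ! t \<Longrightarrow> k \<in> Cs ! s \<Longrightarrow> t = s"
proof -
  assume ts: "t < length Cs" "s < length Cs" and kk: "k \<in> Cs ! t" "k \<in> Cs ! s"
  obtain k1 where k1: "Cs ! t = R `` {k1}" using cls[OF ts(1)] by blast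
  obtain k2 where k2: "Cs ! s = R `` {k2}" using cls[OF ts(2)] by blast
  have a: "(k1, k) \<in> R" "(k2, k) \<in> R" using kk k1 k2 by auto
  have "(k1, k2) \<in> R" using a(1) R_sym[OF a(2)] by (meson rtrancl_trans)
  have "(k2, k1) \<in> R" using R_sym[OF \<open>(k1, k2) \<in> R\<close>] .
  have "R `` {k1} = R `` {k2}"
  proof (intro set_eqI iffI)
    fix z assume "z \<in> R `` {k1}"
    then have "(k1, z) \<in> R" by simp
    then have "(k2, z) \<in> R" using \<open>(k2, k1) \<in> R\<close> by (meson rtrancl_trans)
    then show "z \<in> R `` {k2}" by simp
  next
    fix z assume "z \<in> R `` {k2}"
    then have "(k2, z) \<in> R" by simp
    then have "(k1, z) \<in> R" using \<open>(k1, k2) \<in> R\<close> by (meson rtrancl_trans)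
    then show "z \<in> R `` {k1}" by simp
  qed
  then have "Cs ! t = Cs ! s" using k1 k2 by simp
  then show "t = s" using nth_eq_iff_index_eq[OF dC ts] by simp
qed

lemma key_spec: "k < n \<Longrightarrow> key k < length Cs \<and> k \<in> Cs ! key k"
proof -
  assume "k < n"
  then obtain t where t: "t < length Cs" "k \<in> Cs ! t" using mem_ex by blast
  have "key k = t" unfolding key_def
    by (rule the_equality) (use t uniq in auto)
  then show ?thesis using t by simp
qed

lemma key_uniq: "t < length Cs \<Longrightarrow> k \<in> Cs ! t \<Longrightarrow> key k = t"
  unfolding key_def by (rule the_equality) (use uniq in auto)

lemma key_adj: "adj T F i j \<Longrightarrow> key i = key j"
proof -
  assume a: "adj T F i j"
  then have ij: "i < n" "j < n" unfolding adj_def by auto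
  have arc: "(i, j) \<in> R" using a unfolding DF_arcs_def by auto
  obtain k0 where k0: "Cs ! key i = R `` {k0}" using cls key_spec[OF ij(1)] by blast
  have "(k0, i) \<in> R" using key_spec[OF ij(1)] k0 by auto
  then have "(k0, j) \<in> R" using arc by (meson rtrancl_trans)
  then have "j \<in> Cs ! key i" using k0 by auto
  then show ?thesis using key_uniq key_spec[OF ij(1)] by metis
qed

definition good :: "nat list \<Rightarrow> bool" where
  "good xs \<longleftrightarrow> distinct xs \<and> set xs = {..<n} \<and> length xs = n \<and>
     valid_seq P T (map ((!) F) xs) \<and> tri_after T (map ((!) F) xs) n = tri_after T F n \<and>
     (\<forall>i j. link (map ((!) F) xs) i j \<longrightarrow> key (xs ! i) = key (xs ! j))"

definition W :: "nat list \<Rightarrow> nat" where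
  "W xs = (\<Sum>i<n. i * key (xs ! i))"

lemma good0: "good [0..<n]"
proof -
  have m: "map ((!) F) [0..<n] = F" by (rule nth_equalityI) auto
  have l: "key ([0..<n] ! i) = key ([0..<n] ! j)" if "link F i j" for i j
  proof -
    have "i < n" "j < n" using that unfolding link_def by auto
    then show ?thesis using key_adj[OF link_adj[OF v that]] by simp
  qed
  show ?thesis unfolding good_def m using v l by (simp add: lessThan_atLeast0)
qed

lemma W_bound: "good xs \<Longrightarrow> W xs \<le> n * (n * length Cs)"
proof -
  assume g: "good xs"
  have "W xs \<le> (\<Sum>i<n. n * length Cs)"
    unfolding W_def
  proof (rule sum_mono)
    fix i assume "i \<in> {..<n}"
    then have i: "i < n" by simp
    then have "xs ! i \<in> set xs" using g unfolding good_def by (metis nth_mem)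
    then have "xs ! i < n" using g unfolding good_def by auto
    then have "key (xs ! i) < length Cs" using key_spec by blast
    then show "i * key (xs ! i) \<le> n * length Cs" using i by (intro mult_le_mono) auto
  qed
  then show ?thesis by simp
qed

lemma step:
  assumes g: "good xs" and k: "Suc k < n" and kk: "key (xs ! Suc k) < key (xs ! k)"
  shows "good (swp k xs) \<and> W xs < W (swp k xs)"
proof -
  let ?G = "map ((!) F) xs"
  have lx: "length xs = n" using g unfolding good_def by blast
  have kG: "Suc k < length ?G" using k lx by simp
  have kx: "Suc k < length xs" using k lx by simp
  have mp: "map ((!) F) (swp k xs) = swp k ?G" using swp_map[OF kx] .
  have vG: "valid_seq P T ?G" using g unfolding good_def by blast
  have ind: "\<forall>u\<in>newt (?G ! k). \<not> eps (?G ! Suc k) \<subseteq> u"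
  proof (rule ccontr)
    assume "\<not> ?thesis"
    then have "link ?G k (Suc k)" unfolding link_def using kG by auto
    then have "key (xs ! k) = key (xs ! Suc k)" using g unfolding good_def by blast
    then show False using kk by simp
  qed
  note sw = swap_valid[OF vG kG ind]
  have sxs: "swp k xs ! i = xs ! tr k i" if "i < n" for i using swp_nth[OF kx] that lx by simp
  have good': "good (swp k xs)"
    unfolding good_def
  proof (intro conjI allI impI)
    show "distinct (swp k xs)" using g kx unfolding good_def swp_def by simp
    show "set (swp k xs) = {..<n}" using g kx unfolding good_def swp_def by simp
    show "length (swp k xs) = n" using lx by simp
    show "valid_seq P T (map ((!) F) (swp k xs))" using sw(1) mp by simp
    show "tri_after T (map ((!) F) (swp k xs)) n = tri_after T F n"
      using sw(2)[of n] mp g lx k unfolding good_def by simp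
  next
    fix i j assume l: "link (map ((!) F) (swp k xs)) i j"
    then have ij: "i < n" "j < n" unfolding link_def using lx by auto
    have "link ?G (tr k i) (tr k j)" using link_swap[OF vG kG ind] l mp by simp
    then have "key (xs ! tr k i) = key (xs ! tr k j)" using g unfolding good_def by blast
    then show "key (swp k xs ! i) = key (swp k xs ! j)" using sxs ij by simp
  qed
  have Wd: "W (swp k xs) = W xs + (key (xs ! k) - key (xs ! Suc k))"
  proof -
    let ?f = "\<lambda>i. i * key (xs ! i)" and ?g = "\<lambda>i. i * key (swp k xs ! i)"
    let ?A = "{..<n} - {k, Suc k}"
    have fin: "finite ?A" by simp
    have e: "?g i = ?f i" if "i \<in> ?A" for i using that sxs[of i] unfolding tr_def by auto
    have split: "sum h {..<n} = h k + h (Suc k) + sum h ?A" for h :: "nat \<Rightarrow> nat"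
    proof -
      have "sum h {..<n} = h k + sum h ({..<n} - {k})" using k by (intro sum.remove) auto
      also have "sum h ({..<n} - {k}) = h (Suc k) + sum h ({..<n} - {k} - {Suc k})"
        using k by (intro sum.remove) auto
      also have "{..<n} - {k} - {Suc k} = ?A" by auto
      finally show ?thesis by simp
    qed
    have gk: "swp k xs ! k = xs ! Suc k" "swp k xs ! Suc k = xs ! k"
      using sxs[of k] sxs[of "Suc k"] k unfolding tr_def by auto
    have "W (swp k xs) = ?g k + ?g (Suc k) + sum ?g ?A" unfolding W_def by (rule split)
    also have "sum ?g ?A = sum ?f ?A" using e by (rule sum.cong[OF refl])
    also have "?g k + ?g (Suc k) = k * key (xs ! Suc k) + Suc k * key (xs ! k)" using gk by simp
    finally have 1: "W (swp k xs) = k * key (xs ! Suc k) + Suc k * key (xs ! k) + sum ?f ?A" .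
    have 2: "W xs = k * key (xs ! k) + Suc k * key (xs ! Suc k) + sum ?f ?A" unfolding W_def by (rule split)
    show ?thesis using 1 2 kk by (simp add: algebra_simps)
  qed
  then show ?thesis using good' kk by simp
qed

definition srt :: "nat list \<Rightarrow> bool" where
  "srt ys \<longleftrightarrow> (\<forall>k. Suc k < n \<longrightarrow> key (ys ! k) \<le> key (ys ! Suc k))"

lemma sort_ex: "good xs \<Longrightarrow> \<exists>ys. good ys \<and> srt ys"
proof (induction "n * (n * length Cs) - W xs" arbitrary: xs rule: less_induct)
  case less
  show ?case
  proof (cases "srt xs")
    case True then show ?thesis using less.prems by blast
  next
    case False
    then obtain k where k: "Suc k < n" "key (xs ! Suc k) < key (xs ! k)" unfolding srt_def by (auto simp: not_le)
    have s: "good (swp k xs)" "W xs < W (swp k xs)" using step[OF less.prems k] by auto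
    have "W (swp k xs) \<le> n * (n * length Cs)" using W_bound[OF s(1)] .
    then have "n * (n * length Cs) - W (swp k xs) < n * (n * length Cs) - W xs" using s(2) by simp
    then show ?thesis using less.hyps s(1) by blast
  qed
qed

lemma srt_mono: "srt ys \<Longrightarrow> i \<le> j \<Longrightarrow> j < n \<Longrightarrow> key (ys ! i) \<le> key (ys ! j)"
proof (induction j)
  case 0 then show ?case by simp
next
  case (Suc j)
  show ?case
  proof (cases "i = Suc j")
    case True then show ?thesis by simp
  next
    case False
    then have "key (ys ! i) \<le> key (ys ! j)" using Suc by simp
    also have "key (ys ! j) \<le> key (ys ! Suc j)" using Suc.prems unfolding srt_def by blast
    finally show ?thesis .
  qed
qed

lemma result:
  "\<exists>\<sigma>. bij_betw \<sigma> {..<length F} {..<length F} \<and>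
           (let G = map (\<lambda>k. F ! \<sigma> k) [0..<length F] in
              valid_seq P T G \<and> tri_after T G (length G) = tri_after T F (length F)) \<and>
           (\<forall>k1<length F. \<forall>k2<length F. \<forall>t s. t < s \<and> s < length Cs \<and>
               \<sigma> k1 \<in> Cs ! t \<and> \<sigma> k2 \<in> Cs ! s \<longrightarrow> k1 < k2)"
proof -
  obtain ys where ys: "good ys" "srt ys" using sort_ex[OF good0] by blast
  have d: "distinct ys" "set ys = {..<n}" "length ys = n" using ys(1) unfolding good_def by auto
  have bij: "bij_betw ((!) ys) {..<n} {..<n}" using bij_betw_nth[OF d(1)] d by simp
  have m: "map (\<lambda>k. F ! (ys ! k)) [0..<n] = map ((!) F) ys" by (rule nth_equalityI) (auto simp: d(3))
  have G: "valid_seq P T (map ((!) F) ys)" "tri_after T (map ((!) F) ys) n = tri_after T F n"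
    using ys(1) unfolding good_def by auto
  have ord: "k1 < k2" if k: "k1 < n" "k2 < n" "t < s" "s < length Cs" "ys ! k1 \<in> Cs ! t" "ys ! k2 \<in> Cs ! s"
    for k1 k2 t s
  proof (rule ccontr)
    assume "\<not> k1 < k2"
    then have "key (ys ! k2) \<le> key (ys ! k1)" using srt_mono[OF ys(2)] k by simp
    moreover have "key (ys ! k1) = t" using key_uniq k by simp
    moreover have "key (ys ! k2) = s" using key_uniq k by simp
    ultimately show False using k by simp
  qed
  have lenm: "length (map (\<lambda>k. F ! (ys ! k)) [0..<n]) = n" by simp
  have part2: "let G = map (\<lambda>k. F ! (ys ! k)) [0..<n] in
              valid_seq P T G \<and> tri_after T G (length G) = tri_after T F n"
    unfolding Let_def m using G d(3) by simp
  have part3: "\<forall>k1<n. \<forall>k2<n. \<forall>t s. t < s \<and> s < length Cs \<and>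
               ys ! k1 \<in> Cs ! t \<and> ys ! k2 \<in> Cs ! s \<longrightarrow> k1 < k2"
    using ord by blast
  show ?thesis using bij part2 part3 by blast
qed

end


theorem corollary1:
  fixes P :: "pt set" and T :: "triangle set" and F :: "flip list" and Cs :: "nat set list"
  assumes "valid_seq P T F"
    and "distinct Cs" and "set Cs = DF_components T F"
  shows "\<exists>\<sigma>. bij_betw \<sigma> {..<length F} {..<length F} \<and>
           (let G = map (\<lambda>k. F ! \<sigma> k) [0..<length F] in
              valid_seq P T G \<and> tri_after T G (length G) = tri_after T F (length F)) \<and>
           (\<forall>k1<length F. \<forall>k2<length F. \<forall>t s. t < s \<and> s < length Cs \<and>
               \<sigma> k1 \<in> Cs ! t \<and> \<sigma> k2 \<in> Cs ! s \<longrightarrow> k1 < k2)"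
proof -
  interpret mainctx P T F Cs using assms by unfold_locales
  show ?thesis by (rule result)
qed

end
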